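(* Let $\mathbf{X}\in\mathbb{R}^{n\times p}$ have columns of unit $\ell_2$ norm, let $\boldsymbol{\beta}\in\mathbb{R}^p$ have support $\mathcal{I}$ with $|\mathcal{I}|=k_0\ge1$, and suppose $(\mathbf{X},\boldsymbol{\beta})$ satisfies the exact recovery condition: $\mathbf{X}_{\mathcal{I}}$ has full column rank and $\max_{j\notin\mathcal{I}}\|\mathbf{X}_{\mathcal{I}}^{\dagger}\mathbf{X}_j\|_1<1$. Let $\mathbf{y}=\mathbf{X}\boldsymbol{\beta}+\mathbf{w}$ with $\mathbf{w}\sim\mathcal{N}(\mathbf{0}_n,\sigma^2\mathbf{I}_n)$, and let $\hat{\mathcal{I}}$ be the support estimate of TF-OMP with $k_{max}>k_0$. Then TF-OMP is high SNR consistent: $\lim_{\sigma^2\to0}\mathbb{P}(\hat{\mathcal{I}}\neq\mathcal{I})=0$.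
   Context: Notation: $\mathbf{X}_{\mathcal{J}}$ is the submatrix of columns indexed by $\mathcal{J}$; $\mathbf{A}^{\dagger}=(\mathbf{A}^T\mathbf{A})^{-1}\mathbf{A}^T$ for full column rank $\mathbf{A}$; $\mathbf{P}_{\mathcal{J}}=\mathbf{X}_{\mathcal{J}}\mathbf{X}_{\mathcal{J}}^{\dagger}$. Orthogonal matching pursuit (OMP): set $\mathbf{r}^{(0)}=\mathbf{y}$, $\mathcal{J}^0=\emptyset$; at iteration $k\ge1$ select $t_k=\arg\max_{t\in\{1,\dots,p\}}|\mathbf{X}_t^T\mathbf{r}^{(k-1)}|$, set $\mathcal{J}^k=\mathcal{J}^{k-1}\cup\{t_k\}$ and $\mathbf{r}^{(k)}=(\mathbf{I}_n-\mathbf{P}_{\mathcal{J}^k})\mathbf{y}$. TF-OMP (tuning free OMP): run OMP for $k_{max}$ iterations (it is assumed that along these iterations the matrices $\mathbf{X}_{\mathcal{J}^k}$ have full column rank and the residuals $\mathbf{r}^{(k)}$ are nonzero); compute $t(k)=\|\mathbf{r}^{(k)}\|_2^2/\|\mathbf{r}^{(k-1)}\|_2^2$; let $k^*=\arg\min_{1\le k\le k_{max}-1}t(k)$; output the support estimate $\hat{\mathcal{I}}=\{t_1,\dots,t_{k^*}\}$. *)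

theory Defs
  imports "Jordan_Normal_Form.Gauss_Jordan_Elimination" "HOL-Probability.Probability"
begin

text \<open>Matrices are JNF matrices: X is n x p, columns indexed 0..p-1.\<close>

definition col_sub :: "real mat \<Rightarrow> nat list \<Rightarrow> real mat" where
  "col_sub X js = mat_of_cols (dim_row X) (map (col X) js)"

definition full_col_rank :: "real mat \<Rightarrow> bool" where
  "full_col_rank A \<longleftrightarrow>
     (\<forall>v. v \<in> carrier_vec (dim_col A) \<longrightarrow> A *\<^sub>v v = 0\<^sub>v (dim_row A) \<longrightarrow> v = 0\<^sub>v (dim_col A))"

text \<open>Pseudo-inverse (A^T A)^{-1} A^T (meaningful for full column rank A).\<close>
definition pinv :: "real mat \<Rightarrow> real mat" where
  "pinv A = the (mat_inverse (A\<^sup>T * A)) * A\<^sup>T"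

definition proj :: "real mat \<Rightarrow> nat list \<Rightarrow> real mat" where
  "proj X js = col_sub X js * pinv (col_sub X js)"

definition l1_norm :: "real Matrix.vec \<Rightarrow> real" where
  "l1_norm v = (\<Sum>i<dim_vec v. \<bar>v $ i\<bar>)"

definition sq_norm :: "real Matrix.vec \<Rightarrow> real" where
  "sq_norm v = v \<bullet> v"

definition omp_resid :: "real mat \<Rightarrow> real Matrix.vec \<Rightarrow> nat list \<Rightarrow> real Matrix.vec" where
  "omp_resid X y js = (if js = [] then y else y - proj X js *\<^sub>v y)"

definition omp_select :: "real mat \<Rightarrow> real Matrix.vec \<Rightarrow> nat" where
  "omp_select X r = (LEAST t. t < dim_col X \<and>
      (\<forall>s<dim_col X. \<bar>col X s \<bullet> r\<bar> \<le> \<bar>col X t \<bullet> r\<bar>))"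

fun omp_indices :: "real mat \<Rightarrow> real Matrix.vec \<Rightarrow> nat \<Rightarrow> nat list" where
  "omp_indices X y 0 = []"
| "omp_indices X y (Suc k) =
     (let js = omp_indices X y k in js @ [omp_select X (omp_resid X y js)])"

definition omp_res :: "real mat \<Rightarrow> real Matrix.vec \<Rightarrow> nat \<Rightarrow> real Matrix.vec" where
  "omp_res X y k = omp_resid X y (omp_indices X y k)"

definition omp_valid :: "real mat \<Rightarrow> real Matrix.vec \<Rightarrow> nat \<Rightarrow> bool" where
  "omp_valid X y kmax \<longleftrightarrow>
     (\<forall>k\<le>kmax. omp_res X y k \<noteq> 0\<^sub>v (dim_row X)) \<and>
     (\<forall>k\<in>{1..kmax}. full_col_rank (col_sub X (omp_indices X y k)))"

definition tf_ratio :: "real mat \<Rightarrow> real Matrix.vec \<Rightarrow> nat \<Rightarrow> real" where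
  "tf_ratio X y k = sq_norm (omp_res X y k) / sq_norm (omp_res X y (k - 1))"

definition tf_kstar :: "real mat \<Rightarrow> real Matrix.vec \<Rightarrow> nat \<Rightarrow> nat \<Rightarrow> bool" where
  "tf_kstar X y kmax k \<longleftrightarrow> k \<in> {1..kmax - 1} \<and>
     (\<forall>k'\<in>{1..kmax - 1}. tf_ratio X y k \<le> tf_ratio X y k')"

definition tf_omp_est :: "real mat \<Rightarrow> real Matrix.vec \<Rightarrow> nat \<Rightarrow> nat \<Rightarrow> nat set" where
  "tf_omp_est X y kmax k = set (take k (omp_indices X y kmax))"

definition tf_omp_fails :: "real mat \<Rightarrow> real Matrix.vec \<Rightarrow> nat \<Rightarrow> nat set \<Rightarrow> bool" where
  "tf_omp_fails X y kmax I \<longleftrightarrow> (\<exists>k. tf_kstar X y kmax k \<and> tf_omp_est X y kmax k \<noteq> I)"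

text \<open>Distribution of w ~ N(0, s I_n), s = sigma^2 > 0, as a product of i.i.d. Gaussians.\<close>
definition gauss_noise :: "nat \<Rightarrow> real \<Rightarrow> (nat \<Rightarrow> real) measure" where
  "gauss_noise n s = PiM {..<n} (\<lambda>_. density lborel (normal_density 0 (sqrt s)))"

end

theory Submission
  imports Defs "Jordan_Normal_Form.Determinant"
begin


no_notation Finite_Cartesian_Product.vec_nth (infixl "$" 90)
no_notation Inner_Product.inner (infix "\<bullet>" 70)


lemma sq_norm_nonneg: "sq_norm v \<ge> 0"
  unfolding sq_norm_def scalar_prod_def by (auto intro: sum_nonneg)

lemma sq_norm_zero_iff:
  assumes "v \<in> carrier_vec n" shows "sq_norm v = 0 \<longleftrightarrow> v = 0\<^sub>v n"
proof
  assume "sq_norm v = 0"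
  hence "(\<Sum>i\<in>{0..<n}. v $ i * v $ i) = 0" using assms unfolding sq_norm_def scalar_prod_def by auto
  hence "\<forall>i\<in>{0..<n}. v $ i * v $ i = 0" by (subst (asm) sum_nonneg_eq_0_iff) auto
  thus "v = 0\<^sub>v n" using assms by (intro eq_vecI) auto
next
  assume "v = 0\<^sub>v n" thus "sq_norm v = 0" unfolding sq_norm_def by simp
qed

lemma sq_norm_pos: "v \<in> carrier_vec n \<Longrightarrow> v \<noteq> 0\<^sub>v n \<Longrightarrow> sq_norm v > 0"
  using sq_norm_nonneg[of v] sq_norm_zero_iff[of v n] by linarith

lemma CS_sq:
  assumes "u \<in> carrier_vec n" "v \<in> carrier_vec n"
  shows "(u \<bullet> v)^2 \<le> sq_norm u * sq_norm v"
  using assms Cauchy_Schwarz_ineq_sum[of "\<lambda>i. u$i" "\<lambda>i. v$i" "{0..<n}"]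
  unfolding sq_norm_def scalar_prod_def by (simp add: power2_eq_square)

lemma CS_abs:
  assumes "u \<in> carrier_vec n" "v \<in> carrier_vec n"
  shows "\<bar>u \<bullet> v\<bar> \<le> sqrt (sq_norm u) * sqrt (sq_norm v)"
proof -
  have "\<bar>u \<bullet> v\<bar> = sqrt ((u \<bullet> v)^2)" by simp
  also have "\<dots> \<le> sqrt (sq_norm u * sq_norm v)" using CS_sq[OF assms] by (rule real_sqrt_le_mono)
  also have "\<dots> = sqrt (sq_norm u) * sqrt (sq_norm v)" by (simp add: real_sqrt_mult)
  finally show ?thesis .
qed

lemma sq_norm_add:
  assumes "u \<in> carrier_vec n" "v \<in> carrier_vec n"
  shows "sq_norm (u + v) = sq_norm u + 2 * (u \<bullet> v) + sq_norm v"
proof -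
  have "v \<bullet> u = u \<bullet> v" using comm_scalar_prod[OF assms(2,1)] .
  thus ?thesis using assms unfolding sq_norm_def
    by (simp add: add_scalar_prod_distrib[of _ n] scalar_prod_add_distrib[of _ n])
qed

lemma norm_triangle:
  assumes "u \<in> carrier_vec n" "v \<in> carrier_vec n"
  shows "sqrt (sq_norm (u + v)) \<le> sqrt (sq_norm u) + sqrt (sq_norm v)"
proof -
  have a: "u \<bullet> v \<le> sqrt (sq_norm u) * sqrt (sq_norm v)" using CS_abs[OF assms] by linarith
  have "sq_norm (u + v) \<le> (sqrt (sq_norm u) + sqrt (sq_norm v))^2"
    unfolding sq_norm_add[OF assms] power2_sum using a sq_norm_nonneg[of u] sq_norm_nonneg[of v]
    by simp
  thus ?thesis using sq_norm_nonneg[of u] sq_norm_nonneg[of v] real_le_lsqrt by auto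
qed

lemma sq_norm_smult: "sq_norm (c \<cdot>\<^sub>v v) = c^2 * sq_norm v"
  unfolding sq_norm_def by (simp add: power2_eq_square)

lemma norm_smult: "sqrt (sq_norm (c \<cdot>\<^sub>v v)) = \<bar>c\<bar> * sqrt (sq_norm v)"
  unfolding sq_norm_smult by (simp add: real_sqrt_mult)

lemma norm_diff_lower:
  assumes "u \<in> carrier_vec n" "v \<in> carrier_vec n"
  shows "sqrt (sq_norm (u + v)) \<ge> sqrt (sq_norm u) - sqrt (sq_norm v)"
proof -
  have "u = (u + v) + (-1) \<cdot>\<^sub>v v" using assms by (intro eq_vecI) auto
  hence "sqrt (sq_norm u) \<le> sqrt (sq_norm (u + v)) + sqrt (sq_norm ((-1) \<cdot>\<^sub>v v))"
    using norm_triangle[of "u+v" n "(-1) \<cdot>\<^sub>v v"] assms by (metis add_carrier_vec smult_carrier_vec)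
  thus ?thesis unfolding norm_smult by simp
qed




section \<open>Column submatrices, spans\<close>

lemma col_sub_carrier: "col_sub X js \<in> carrier_mat (dim_row X) (length js)"
  unfolding col_sub_def using mat_of_cols_carrier(1)[of "dim_row X" "map (col X) js"] by simp

lemma col_sub_dims[simp]: "dim_row (col_sub X js) = dim_row X" "dim_col (col_sub X js) = length js"
  unfolding col_sub_def by simp_all

lemma col_sub_index: "i < dim_row X \<Longrightarrow> j < length js \<Longrightarrow> col_sub X js $$ (i,j) = X $$ (i, js!j)"
  unfolding col_sub_def mat_of_cols_def col_def by simp

lemma col_col_sub: "j < length js \<Longrightarrow> col (col_sub X js) j = col X (js!j)"
  unfolding col_sub_def by (subst col_mat_of_cols) (auto simp: col_def)

lemma col_index: "i < dim_row X \<Longrightarrow> col X j $ i = X $$ (i,j)"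
  unfolding col_def by simp

lemma col_sub_mult_index:
  assumes "i < dim_row X" "v \<in> carrier_vec (length js)"
  shows "(col_sub X js *\<^sub>v v) $ i = (\<Sum>j<length js. X $$ (i, js!j) * v $ j)"
  using assms by (simp add: scalar_prod_def col_sub_index atLeast0LessThan row_def)

definition in_span :: "real mat \<Rightarrow> nat set \<Rightarrow> real Matrix.vec \<Rightarrow> bool" where
  "in_span X S u \<longleftrightarrow> (\<exists>c. \<forall>i<dim_row X. u $ i = (\<Sum>x\<in>S. X $$ (i,x) * c x))"

definition indep :: "real mat \<Rightarrow> nat set \<Rightarrow> bool" where
  "indep X S \<longleftrightarrow> (\<forall>c. (\<forall>i<dim_row X. (\<Sum>x\<in>S. X $$ (i,x) * c x) = 0) \<longrightarrow> (\<forall>x\<in>S. c x = 0))"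

lemma col_dot: "w \<in> carrier_vec (dim_row X) \<Longrightarrow> col X x \<bullet> w = (\<Sum>i<dim_row X. X $$ (i,x) * w $ i)"
  unfolding scalar_prod_def by (simp add: col_index atLeast0LessThan)

lemma ORTH:
  assumes S: "finite S" and u: "u \<in> carrier_vec (dim_row X)" and w: "w \<in> carrier_vec (dim_row X)"
    and sp: "in_span X S u" and orth: "\<forall>x\<in>S. col X x \<bullet> w = 0"
  shows "w \<bullet> u = 0"
proof -
  obtain c where c: "\<forall>i<dim_row X. u $ i = (\<Sum>x\<in>S. X $$ (i,x) * c x)" using sp unfolding in_span_def by auto
  have "w \<bullet> u = (\<Sum>i<dim_row X. w $ i * (\<Sum>x\<in>S. X $$ (i,x) * c x))"
    unfolding scalar_prod_def using u c by (simp add: atLeast0LessThan)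
  also have "\<dots> = (\<Sum>i<dim_row X. \<Sum>x\<in>S. w $ i * (X $$ (i,x) * c x))"
    by (simp add: sum_distrib_left)
  also have "\<dots> = (\<Sum>x\<in>S. \<Sum>i<dim_row X. w $ i * (X $$ (i,x) * c x))"
    by (rule sum.swap)
  also have "\<dots> = (\<Sum>x\<in>S. c x * (\<Sum>i<dim_row X. X $$ (i,x) * w $ i))"
    by (simp add: sum_distrib_left mult_ac)
  also have "\<dots> = (\<Sum>x\<in>S. c x * (col X x \<bullet> w))" using col_dot[OF w] by simp
  also have "\<dots> = 0" using orth by simp
  finally show ?thesis .
qed

lemma in_span_diff:
  "in_span X S u \<Longrightarrow> in_span X S v \<Longrightarrow> u \<in> carrier_vec (dim_row X) \<Longrightarrow> v \<in> carrier_vec (dim_row X)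
   \<Longrightarrow> in_span X S (u - v)"
  unfolding in_span_def
proof (elim exE)
  fix c d assume c: "\<forall>i<dim_row X. u $ i = (\<Sum>x\<in>S. X $$ (i, x) * c x)"
    and d: "\<forall>i<dim_row X. v $ i = (\<Sum>x\<in>S. X $$ (i, x) * d x)"
    and "u \<in> carrier_vec (dim_row X)" "v \<in> carrier_vec (dim_row X)"
  thus "\<exists>c. \<forall>i<dim_row X. (u - v) $ i = (\<Sum>x\<in>S. X $$ (i, x) * c x)"
  proof (intro exI[of _ "\<lambda>x. c x - d x"] allI impI)
    fix i assume i: "i < dim_row X"
    have "(u - v) $ i = u $ i - v $ i" using i \<open>v \<in> carrier_vec (dim_row X)\<close> by simp
    also have "\<dots> = (\<Sum>x\<in>S. X $$ (i, x) * c x) - (\<Sum>x\<in>S. X $$ (i, x) * d x)" using c d i by simp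
    also have "\<dots> = (\<Sum>x\<in>S. X $$ (i, x) * (c x - d x))" by (simp add: right_diff_distrib sum_subtractf)
    finally show "(u - v) $ i = (\<Sum>x\<in>S. X $$ (i, x) * (c x - d x))" .
  qed
qed

lemma in_span_add:
  "in_span X S u \<Longrightarrow> in_span X S v \<Longrightarrow> u \<in> carrier_vec (dim_row X) \<Longrightarrow> v \<in> carrier_vec (dim_row X)
   \<Longrightarrow> in_span X S (u + v)"
  unfolding in_span_def
proof (elim exE)
  fix c d assume c: "\<forall>i<dim_row X. u $ i = (\<Sum>x\<in>S. X $$ (i, x) * c x)"
    and d: "\<forall>i<dim_row X. v $ i = (\<Sum>x\<in>S. X $$ (i, x) * d x)"
    and "u \<in> carrier_vec (dim_row X)" "v \<in> carrier_vec (dim_row X)"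
  thus "\<exists>c. \<forall>i<dim_row X. (u + v) $ i = (\<Sum>x\<in>S. X $$ (i, x) * c x)"
  proof (intro exI[of _ "\<lambda>x. c x + d x"] allI impI)
    fix i assume i: "i < dim_row X"
    have "(u + v) $ i = u $ i + v $ i" using i \<open>v \<in> carrier_vec (dim_row X)\<close> by simp
    also have "\<dots> = (\<Sum>x\<in>S. X $$ (i, x) * c x) + (\<Sum>x\<in>S. X $$ (i, x) * d x)" using c d i by simp
    also have "\<dots> = (\<Sum>x\<in>S. X $$ (i, x) * (c x + d x))" by (simp add: distrib_left sum.distrib)
    finally show "(u + v) $ i = (\<Sum>x\<in>S. X $$ (i, x) * (c x + d x))" .
  qed
qed

lemma in_span_mono:
  assumes "in_span X S u" "S \<subseteq> T" "finite T" shows "in_span X T u"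
proof -
  obtain c where c: "\<forall>i<dim_row X. u $ i = (\<Sum>x\<in>S. X $$ (i,x) * c x)" using assms unfolding in_span_def by auto
  have "\<forall>i<dim_row X. u $ i = (\<Sum>x\<in>T. X $$ (i,x) * (if x \<in> S then c x else 0))"
  proof (intro allI impI)
    fix i assume "i < dim_row X"
    hence "u $ i = (\<Sum>x\<in>S. X $$ (i,x) * (if x \<in> S then c x else 0))" using c by simp
    also have "\<dots> = (\<Sum>x\<in>T. X $$ (i,x) * (if x \<in> S then c x else 0))"
      using assms by (intro sum.mono_neutral_left) auto
    finally show "u $ i = \<dots>" .
  qed
  thus ?thesis unfolding in_span_def by (rule exI[of _ "\<lambda>x. if x \<in> S then c x else 0"])
qed

lemma sum_nth_set:
  assumes "distinct js" shows "(\<Sum>j<length js. g (js!j)) = (\<Sum>x\<in>set js. g x)"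
  using sum.reindex_bij_betw[OF bij_betw_nth[OF assms refl refl], of g] by simp

lemma in_span_col_sub:
  assumes "distinct js" "v \<in> carrier_vec (length js)"
  shows "in_span X (set js) (col_sub X js *\<^sub>v v)"
proof -
  define c where "c = (\<lambda>x. v $ (the_inv_into {..<length js} ((!) js) x))"
  have inj: "inj_on ((!) js) {..<length js}" using bij_betw_imp_inj_on[OF bij_betw_nth[OF assms(1) refl refl]] .
  have cj: "c (js!j) = v $ j" if "j < length js" for j
    unfolding c_def using the_inv_into_f_f[OF inj] that by simp
  have "\<forall>i<dim_row X. (col_sub X js *\<^sub>v v) $ i = (\<Sum>x\<in>set js. X $$ (i,x) * c x)"
  proof (intro allI impI)
    fix i assume i: "i < dim_row X"
    have "(col_sub X js *\<^sub>v v) $ i = (\<Sum>j<length js. X $$ (i, js!j) * c (js!j))"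
      unfolding col_sub_mult_index[OF i assms(2)] by (rule sum.cong) (simp_all add: cj)
    also have "\<dots> = (\<Sum>x\<in>set js. X $$ (i,x) * c x)" by (rule sum_nth_set[OF assms(1)])
    finally show "(col_sub X js *\<^sub>v v) $ i = \<dots>" .
  qed
  thus ?thesis unfolding in_span_def by (rule exI[of _ c])
qed

lemma in_span_to_col_sub:
  assumes "distinct js" "in_span X (set js) u" "u \<in> carrier_vec (dim_row X)"
  shows "\<exists>a\<in>carrier_vec (length js). u = col_sub X js *\<^sub>v a"
proof -
  obtain c where c: "\<forall>i<dim_row X. u $ i = (\<Sum>x\<in>set js. X $$ (i,x) * c x)"
    using assms unfolding in_span_def by auto
  define a where "a = Matrix.vec (length js) (\<lambda>j. c (js!j))"
  have a: "a \<in> carrier_vec (length js)" unfolding a_def by simp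
  have "u = col_sub X js *\<^sub>v a"
  proof (rule eq_vecI)
    fix i assume "i < dim_vec (col_sub X js *\<^sub>v a)"
    hence i: "i < dim_row X" by simp
    have "(col_sub X js *\<^sub>v a) $ i = (\<Sum>j<length js. X $$ (i, js!j) * c (js!j))"
      unfolding col_sub_mult_index[OF i a] by (rule sum.cong) (simp_all add: a_def)
    also have "\<dots> = (\<Sum>x\<in>set js. X $$ (i,x) * c x)" by (rule sum_nth_set[OF assms(1)])
    also have "\<dots> = u $ i" using c i by simp
    finally show "u $ i = (col_sub X js *\<^sub>v a) $ i" by (rule sym)
  next
    show "dim_vec u = dim_vec (col_sub X js *\<^sub>v a)" using assms(3) by simp
  qed
  thus ?thesis using a by blast
qed




lemma col_sub_mult_as_set:
  assumes "distinct js" "v \<in> carrier_vec (length js)"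
  obtains c where "\<forall>j<length js. c (js!j) = v $ j"
    "\<forall>i<dim_row X. (col_sub X js *\<^sub>v v) $ i = (\<Sum>x\<in>set js. X $$ (i,x) * c x)"
proof -
  define c where "c = (\<lambda>x. v $ (the_inv_into {..<length js} ((!) js) x))"
  have inj: "inj_on ((!) js) {..<length js}" using bij_betw_imp_inj_on[OF bij_betw_nth[OF assms(1) refl refl]] .
  have cj: "c (js!j) = v $ j" if "j < length js" for j
    unfolding c_def using the_inv_into_f_f[OF inj] that by simp
  have "\<forall>i<dim_row X. (col_sub X js *\<^sub>v v) $ i = (\<Sum>x\<in>set js. X $$ (i,x) * c x)"
  proof (intro allI impI)
    fix i assume i: "i < dim_row X"
    have "(col_sub X js *\<^sub>v v) $ i = (\<Sum>j<length js. X $$ (i, js!j) * c (js!j))"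
      unfolding col_sub_mult_index[OF i assms(2)] by (rule sum.cong) (simp_all add: cj)
    also have "\<dots> = (\<Sum>x\<in>set js. X $$ (i,x) * c x)" by (rule sum_nth_set[OF assms(1)])
    finally show "(col_sub X js *\<^sub>v v) $ i = \<dots>" .
  qed
  thus ?thesis using that cj by blast
qed

lemma sum_ind: "a < (m::nat) \<Longrightarrow> (\<Sum>j<m. f j * (if j = a then 1 else 0)) = (f a :: real)"
proof -
  assume a: "a < m"
  have "(\<Sum>j<m. f j * (if j = a then 1 else 0)) = (\<Sum>j<m. if j = a then f a else 0)" by (rule sum.cong) auto
  also have "\<dots> = (if a \<in> {..<m} then f a else 0)" by (rule sum.delta) simp
  finally show ?thesis using a by simp
qed

lemma FR_distinct:
  assumes fr: "full_col_rank (col_sub X js)" shows "distinct js"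
proof (rule ccontr)
  assume "\<not> distinct js"
  then obtain a b where ab: "a < length js" "b < length js" "a \<noteq> b" "js!a = js!b"
    unfolding distinct_conv_nth by blast
  define v :: "real Matrix.vec" where
    "v = Matrix.vec (length js) (\<lambda>j. (if j = a then 1 else 0) - (if j = b then 1 else 0))"
  have v: "v \<in> carrier_vec (length js)" unfolding v_def by simp
  have "col_sub X js *\<^sub>v v = 0\<^sub>v (dim_row X)"
  proof (rule eq_vecI)
    fix i assume "i < dim_vec (0\<^sub>v (dim_row X) :: real Matrix.vec)"
    hence i: "i < dim_row X" by simp
    have "(col_sub X js *\<^sub>v v) $ i = (\<Sum>j<length js. X $$ (i, js!j) * ((if j = a then 1 else 0) - (if j = b then 1 else 0)))"
      unfolding col_sub_mult_index[OF i v] by (rule sum.cong) (simp_all add: v_def)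
    also have "\<dots> = (\<Sum>j<length js. X $$ (i, js!j) * (if j = a then 1 else 0)) - (\<Sum>j<length js. X $$ (i, js!j) * (if j = b then 1 else 0))"
      by (simp add: right_diff_distrib sum_subtractf)
    also have "\<dots> = X $$ (i, js!a) - X $$ (i, js!b)" using ab(1,2) by (simp add: sum_ind)
    also have "\<dots> = 0" using ab(4) by simp
    finally show "(col_sub X js *\<^sub>v v) $ i = 0\<^sub>v (dim_row X) $ i" using i by simp
  qed simp
  hence "v = 0\<^sub>v (length js)" using fr v unfolding full_col_rank_def by simp
  moreover have "v $ a = 1" unfolding v_def using ab by simp
  ultimately show False using ab by simp
qed

lemma FR_indep:
  assumes fr: "full_col_rank (col_sub X js)" shows "indep X (set js)"
  unfolding indep_def
proof (intro allI impI)
  fix c assume c: "\<forall>i<dim_row X. (\<Sum>x\<in>set js. X $$ (i, x) * c x) = 0"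
  have d: "distinct js" using FR_distinct[OF fr] .
  define v where "v = Matrix.vec (length js) (\<lambda>j. c (js!j))"
  have v: "v \<in> carrier_vec (length js)" unfolding v_def by simp
  have "col_sub X js *\<^sub>v v = 0\<^sub>v (dim_row X)"
  proof (rule eq_vecI)
    fix i assume "i < dim_vec (0\<^sub>v (dim_row X) :: real Matrix.vec)"
    hence i: "i < dim_row X" by simp
    have "(col_sub X js *\<^sub>v v) $ i = (\<Sum>j<length js. X $$ (i, js!j) * c (js!j))"
      unfolding col_sub_mult_index[OF i v] by (rule sum.cong) (simp_all add: v_def)
    also have "\<dots> = (\<Sum>x\<in>set js. X $$ (i,x) * c x)" by (rule sum_nth_set[OF d])
    finally show "(col_sub X js *\<^sub>v v) $ i = 0\<^sub>v (dim_row X) $ i" using i c by simp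
  qed simp
  hence v0: "v = 0\<^sub>v (length js)" using fr v unfolding full_col_rank_def by simp
  show "\<forall>x\<in>set js. c x = 0"
  proof
    fix x assume "x \<in> set js"
    then obtain j where j: "j < length js" "x = js!j" by (auto simp: in_set_conv_nth)
    have "v $ j = 0" using v0 j by simp
    thus "c x = 0" using j unfolding v_def by simp
  qed
qed

lemma indep_FR:
  assumes d: "distinct js" and ind: "indep X (set js)" shows "full_col_rank (col_sub X js)"
  unfolding full_col_rank_def
proof (intro allI impI)
  fix v :: "real Matrix.vec" assume v: "v \<in> carrier_vec (dim_col (col_sub X js))"
    and z: "col_sub X js *\<^sub>v v = 0\<^sub>v (dim_row (col_sub X js))"
  have v': "v \<in> carrier_vec (length js)" using v by simp
  obtain c where cj: "\<forall>j<length js. c (js!j) = v $ j"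
    and cs: "\<forall>i<dim_row X. (col_sub X js *\<^sub>v v) $ i = (\<Sum>x\<in>set js. X $$ (i,x) * c x)"
    using col_sub_mult_as_set[OF d v'] by blast
  have "\<forall>i<dim_row X. (\<Sum>x\<in>set js. X $$ (i,x) * c x) = 0"
  proof (intro allI impI)
    fix i assume i: "i < dim_row X"
    have "(col_sub X js *\<^sub>v v) $ i = 0" using z i by simp
    thus "(\<Sum>x\<in>set js. X $$ (i,x) * c x) = 0" using cs i by simp
  qed
  hence c0: "\<forall>x\<in>set js. c x = 0" using ind unfolding indep_def by blast
  show "v = 0\<^sub>v (dim_col (col_sub X js))"
  proof (rule eq_vecI)
    fix j assume "j < dim_vec (0\<^sub>v (dim_col (col_sub X js)) :: real Matrix.vec)"
    hence j: "j < length js" by simp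
    have "v $ j = c (js!j)" using cj j by simp
    also have "\<dots> = 0" using c0 j by simp
    finally show "v $ j = 0\<^sub>v (dim_col (col_sub X js)) $ j" using j by simp
  qed (use v' in simp)
qed

lemma FR_iff: "full_col_rank (col_sub X js) \<longleftrightarrow> distinct js \<and> indep X (set js)"
  using FR_distinct FR_indep indep_FR by blast

lemma indep_mono:
  assumes ind: "indep X T" and sub: "S \<subseteq> T" and fin: "finite T" shows "indep X S"
  unfolding indep_def
proof (intro allI impI)
  fix c assume c: "\<forall>i<dim_row X. (\<Sum>x\<in>S. X $$ (i, x) * c x) = 0"
  define c' where "c' = (\<lambda>x. if x \<in> S then c x else 0)"
  have "\<forall>i<dim_row X. (\<Sum>x\<in>T. X $$ (i, x) * c' x) = 0"
  proof (intro allI impI)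
    fix i assume i: "i < dim_row X"
    have "(\<Sum>x\<in>T. X $$ (i, x) * c' x) = (\<Sum>x\<in>S. X $$ (i, x) * c' x)"
      using sub fin by (intro sum.mono_neutral_right) (auto simp: c'_def)
    also have "\<dots> = (\<Sum>x\<in>S. X $$ (i, x) * c x)" by (rule sum.cong) (auto simp: c'_def)
    finally show "(\<Sum>x\<in>T. X $$ (i, x) * c' x) = 0" using c i by simp
  qed
  hence "\<forall>x\<in>T. c' x = 0" using ind unfolding indep_def by blast
  show "\<forall>x\<in>S. c x = 0"
  proof
    fix x assume x: "x \<in> S"
    hence "c' x = 0" using \<open>\<forall>x\<in>T. c' x = 0\<close> sub by blast
    thus "c x = 0" using x unfolding c'_def by simp
  qed
qed




lemma gram_inv:
  fixes A :: "real mat"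
  assumes A: "A \<in> carrier_mat n m" and fr: "full_col_rank A"
  obtains B where "mat_inverse (transpose_mat A * A) = Some B"
    "(transpose_mat A * A) * B = 1\<^sub>m m" "B * (transpose_mat A * A) = 1\<^sub>m m"
    "B \<in> carrier_mat m m" "transpose_mat B = B"
proof -
  let ?G = "transpose_mat A * A"
  have G: "?G \<in> carrier_mat m m" using A by simp
  have det: "det ?G \<noteq> 0"
  proof
    assume "det ?G = 0"
    then obtain v where v: "v \<in> carrier_vec m" "v \<noteq> 0\<^sub>v m" "?G *\<^sub>v v = 0\<^sub>v m"
      using det_0_iff_vec_prod_zero_field[OF G] by blast
    have Av: "A *\<^sub>v v \<in> carrier_vec n" using A v by simp
    have "sq_norm (A *\<^sub>v v) = (transpose_mat A *\<^sub>v (A *\<^sub>v v)) \<bullet> v"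
      unfolding sq_norm_def using transpose_vec_mult_scalar[OF A v(1) Av] by simp
    also have "transpose_mat A *\<^sub>v (A *\<^sub>v v) = ?G *\<^sub>v v" using A v by simp
    also have "\<dots> \<bullet> v = 0" using v by simp
    finally have "A *\<^sub>v v = 0\<^sub>v n" using sq_norm_zero_iff[OF Av] by simp
    hence "v = 0\<^sub>v m" using fr A v unfolding full_col_rank_def by auto
    thus False using v by simp
  qed
  have U: "?G \<in> Units (ring_mat TYPE(real) m ())" by (rule det_non_zero_imp_unit[OF G det])
  obtain B where B: "mat_inverse ?G = Some B"
    using mat_inverse(1)[OF G, of "()"] U by (cases "mat_inverse ?G") auto
  have BB: "?G * B = 1\<^sub>m m" "B * ?G = 1\<^sub>m m" "B \<in> carrier_mat m m"
    using mat_inverse(2)[OF G B] by auto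
  have GT: "transpose_mat ?G = ?G" using A by (simp add: transpose_mult[of "transpose_mat A" m n A m])
  have "transpose_mat B * ?G = 1\<^sub>m m"
  proof -
    have "transpose_mat (?G * B) = transpose_mat B * transpose_mat ?G"
      by (rule transpose_mult[OF G BB(3)])
    thus ?thesis using BB(1) GT by simp
  qed
  hence "transpose_mat B = transpose_mat B * (?G * B)" using BB by simp
  also have "\<dots> = (transpose_mat B * ?G) * B" using BB G by (simp add: assoc_mult_mat[of _ m m _ m _ m])
  also have "\<dots> = B" using \<open>transpose_mat B * ?G = 1\<^sub>m m\<close> BB by simp
  finally show ?thesis using that B BB by blast
qed

lemma proj_carrier: "proj X js \<in> carrier_mat (dim_row X) (dim_row X)"
  unfolding proj_def pinv_def carrier_mat_def
  by (simp only: index_mult_mat(2,3) index_transpose_mat(2,3) col_sub_dims mem_Collect_eq conj_absorb)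

lemma resid_carrier: "y \<in> carrier_vec (dim_row X) \<Longrightarrow> omp_resid X y js \<in> carrier_vec (dim_row X)"
  unfolding omp_resid_def using proj_carrier[of X js] by (auto intro: minus_carrier_vec)

lemma proj_facts:
  assumes fr: "full_col_rank (col_sub X js)" and y: "y \<in> carrier_vec (dim_row X)"
  shows "\<forall>x\<in>set js. col X x \<bullet> (y - proj X js *\<^sub>v y) = 0"
    "in_span X (set js) (proj X js *\<^sub>v y)"
proof -
  let ?n = "dim_row X" and ?m = "length js"
  let ?A = "col_sub X js"
  have A: "?A \<in> carrier_mat ?n ?m" by (rule col_sub_carrier)
  obtain B where B: "mat_inverse (transpose_mat ?A * ?A) = Some B"
    "(transpose_mat ?A * ?A) * B = 1\<^sub>m ?m" "B * (transpose_mat ?A * ?A) = 1\<^sub>m ?m"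
    "B \<in> carrier_mat ?m ?m" "transpose_mat B = B"
    using gram_inv[OF A fr] by blast
  have pinv: "pinv ?A = B * transpose_mat ?A" unfolding pinv_def using B(1) by simp
  define a where "a = B *\<^sub>v (transpose_mat ?A *\<^sub>v y)"
  have At: "transpose_mat ?A \<in> carrier_mat ?m ?n" using A by simp
  have ATy: "transpose_mat ?A *\<^sub>v y \<in> carrier_vec ?m" using At y by (rule mult_mat_vec_carrier)
  have a: "a \<in> carrier_vec ?m" unfolding a_def using B(4) ATy by (rule mult_mat_vec_carrier)
  have BAt: "B * transpose_mat ?A \<in> carrier_mat ?m ?n" using B(4) At by (rule mult_carrier_mat)
  have "proj X js *\<^sub>v y = (?A * (B * transpose_mat ?A)) *\<^sub>v y" unfolding proj_def pinv by (rule refl)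
  also have "\<dots> = ?A *\<^sub>v ((B * transpose_mat ?A) *\<^sub>v y)" by (rule assoc_mult_mat_vec[OF A BAt y])
  also have "(B * transpose_mat ?A) *\<^sub>v y = a" unfolding a_def by (rule assoc_mult_mat_vec[OF B(4) At y])
  finally have Py: "proj X js *\<^sub>v y = ?A *\<^sub>v a" .
  show "in_span X (set js) (proj X js *\<^sub>v y)"
    unfolding Py by (rule in_span_col_sub[OF FR_distinct[OF fr] a])
  have Aa: "?A *\<^sub>v a \<in> carrier_vec ?n" using A a by (rule mult_mat_vec_carrier)
  have G: "transpose_mat ?A * ?A \<in> carrier_mat ?m ?m" using At A by (rule mult_carrier_mat)
  have "transpose_mat ?A *\<^sub>v (y - ?A *\<^sub>v a) = transpose_mat ?A *\<^sub>v y - transpose_mat ?A *\<^sub>v (?A *\<^sub>v a)"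
    by (rule mult_minus_distrib_mat_vec[OF At y Aa])
  also have "transpose_mat ?A *\<^sub>v (?A *\<^sub>v a) = (transpose_mat ?A * ?A) *\<^sub>v a"
    by (rule assoc_mult_mat_vec[OF At A a, symmetric])
  also have "\<dots> = ((transpose_mat ?A * ?A) * B) *\<^sub>v (transpose_mat ?A *\<^sub>v y)"
    unfolding a_def by (rule assoc_mult_mat_vec[OF G B(4) ATy, symmetric])
  also have "\<dots> = transpose_mat ?A *\<^sub>v y" unfolding B(2) using ATy by simp
  finally have z: "transpose_mat ?A *\<^sub>v (y - proj X js *\<^sub>v y) = 0\<^sub>v ?m" unfolding Py using ATy by simp
  show "\<forall>x\<in>set js. col X x \<bullet> (y - proj X js *\<^sub>v y) = 0"
  proof
    fix x assume "x \<in> set js"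
    then obtain j where j: "j < ?m" "x = js!j" by (auto simp: in_set_conv_nth)
    have "(transpose_mat ?A *\<^sub>v (y - proj X js *\<^sub>v y)) $ j = col ?A j \<bullet> (y - proj X js *\<^sub>v y)"
      using j A by simp
    thus "col X x \<bullet> (y - proj X js *\<^sub>v y) = 0" using z j col_col_sub[OF j(1), of X] by simp
  qed
qed

definition okl :: "real mat \<Rightarrow> nat list \<Rightarrow> bool" where
  "okl X js \<longleftrightarrow> js = [] \<or> full_col_rank (col_sub X js)"

lemma resid_facts:
  assumes ok: "okl X js" and y: "y \<in> carrier_vec (dim_row X)"
  shows "\<forall>x\<in>set js. col X x \<bullet> omp_resid X y js = 0"
    "in_span X (set js) (y - omp_resid X y js)"
proof -
  show "\<forall>x\<in>set js. col X x \<bullet> omp_resid X y js = 0"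
    using proj_facts(1)[OF _ y] ok unfolding okl_def omp_resid_def by auto
  show "in_span X (set js) (y - omp_resid X y js)"
  proof (cases "js = []")
    case True
    have "y - y = 0\<^sub>v (dim_row X)" using y by simp
    thus ?thesis using True y unfolding omp_resid_def in_span_def by simp
  next
    case False
    hence fr: "full_col_rank (col_sub X js)" using ok unfolding okl_def by simp
    have Pc: "proj X js *\<^sub>v y \<in> carrier_vec (dim_row X)" using proj_carrier[of X js] y by (rule mult_mat_vec_carrier)
    have "y - (y - proj X js *\<^sub>v y) = proj X js *\<^sub>v y" using y Pc by (intro eq_vecI) auto
    thus ?thesis using False proj_facts(2)[OF fr y] unfolding omp_resid_def by simp
  qed
qed

lemma resid_add:
  assumes "y1 \<in> carrier_vec (dim_row X)" "y2 \<in> carrier_vec (dim_row X)"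
  shows "omp_resid X (y1 + y2) js = omp_resid X y1 js + omp_resid X y2 js"
proof -
  have P: "proj X js \<in> carrier_mat (dim_row X) (dim_row X)" by (rule proj_carrier)
  show ?thesis unfolding omp_resid_def using assms P
    by (auto simp: mult_add_distrib_mat_vec[OF P] intro!: eq_vecI)
qed

lemma resid_smult:
  assumes "y \<in> carrier_vec (dim_row X)"
  shows "omp_resid X (c \<cdot>\<^sub>v y) js = c \<cdot>\<^sub>v omp_resid X y js"
proof -
  have P: "proj X js \<in> carrier_mat (dim_row X) (dim_row X)" by (rule proj_carrier)
  show ?thesis unfolding omp_resid_def using assms P
    by (auto simp: mult_mat_vec[OF P] algebra_simps intro!: eq_vecI)
qed




lemma in_span_zero: "in_span X S (0\<^sub>v (dim_row X))"
  unfolding in_span_def by (rule exI[of _ "\<lambda>_. 0"]) simp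

lemma resid_orth:
  assumes ok: "okl X js" and y: "y \<in> carrier_vec (dim_row X)"
  shows "sq_norm y = sq_norm (omp_resid X y js) + sq_norm (y - omp_resid X y js)"
proof -
  let ?r = "omp_resid X y js"
  have r: "?r \<in> carrier_vec (dim_row X)" using resid_carrier[OF y] .
  have d: "y - ?r \<in> carrier_vec (dim_row X)" using y r by simp
  have o: "?r \<bullet> (y - ?r) = 0"
    using ORTH[OF finite_set d r resid_facts(2)[OF ok y] resid_facts(1)[OF ok y]] .
  have "y = ?r + (y - ?r)" using y r by (intro eq_vecI) auto
  hence "sq_norm y = sq_norm (?r + (y - ?r))" by simp
  also have "\<dots> = sq_norm ?r + sq_norm (y - ?r)" unfolding sq_norm_add[OF r d] o by simp
  finally show ?thesis .
qed

lemma resid_le: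
  assumes ok: "okl X js" and y: "y \<in> carrier_vec (dim_row X)"
  shows "sq_norm (omp_resid X y js) \<le> sq_norm y"
  using resid_orth[OF ok y] sq_norm_nonneg[of "y - omp_resid X y js"] by linarith

lemma resid_zero:
  assumes ok: "okl X js" and u: "u \<in> carrier_vec (dim_row X)" and sp: "in_span X (set js) u"
  shows "omp_resid X u js = 0\<^sub>v (dim_row X)"
proof -
  let ?r = "omp_resid X u js"
  have r: "?r \<in> carrier_vec (dim_row X)" using resid_carrier[OF u] .
  have d: "u - ?r \<in> carrier_vec (dim_row X)" using u r by simp
  have "in_span X (set js) (u - (u - ?r))"
    by (rule in_span_diff[OF sp resid_facts(2)[OF ok u] u d])
  moreover have "u - (u - ?r) = ?r" using u r by (intro eq_vecI) auto
  ultimately have sr: "in_span X (set js) ?r" by simp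
  have "?r \<bullet> ?r = 0" using ORTH[OF finite_set r r sr resid_facts(1)[OF ok u]] .
  thus ?thesis using sq_norm_zero_iff[OF r] unfolding sq_norm_def by simp
qed

lemma resid_same_set:
  assumes ok1: "okl X js1" and ok2: "okl X js2" and S: "set js1 = set js2"
    and y: "y \<in> carrier_vec (dim_row X)"
  shows "omp_resid X y js1 = omp_resid X y js2"
proof -
  let ?r1 = "omp_resid X y js1" and ?r2 = "omp_resid X y js2"
  have r1: "?r1 \<in> carrier_vec (dim_row X)" and r2: "?r2 \<in> carrier_vec (dim_row X)"
    using resid_carrier[OF y] by auto
  have d1: "y - ?r1 \<in> carrier_vec (dim_row X)" and d2: "y - ?r2 \<in> carrier_vec (dim_row X)"
    using y r1 r2 by auto
  have dd: "?r1 - ?r2 \<in> carrier_vec (dim_row X)" using r1 r2 by simp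
  have "in_span X (set js1) ((y - ?r2) - (y - ?r1))"
    using in_span_diff[OF _ resid_facts(2)[OF ok1 y] d2 d1] resid_facts(2)[OF ok2 y] S by simp
  moreover have "(y - ?r2) - (y - ?r1) = ?r1 - ?r2" using y r1 r2 by (intro eq_vecI) auto
  ultimately have sp: "in_span X (set js1) (?r1 - ?r2)" by simp
  have "\<forall>x\<in>set js1. col X x \<bullet> (?r1 - ?r2) = 0"
  proof
    fix x assume x: "x \<in> set js1"
    have cx: "col X x \<in> carrier_vec (dim_row X)" by (simp add: col_def)
    have "col X x \<bullet> (?r1 - ?r2) = col X x \<bullet> ?r1 - col X x \<bullet> ?r2"
      by (rule scalar_prod_minus_distrib[OF cx r1 r2])
    thus "col X x \<bullet> (?r1 - ?r2) = 0" using resid_facts(1)[OF ok1 y] resid_facts(1)[OF ok2 y] x S by simp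
  qed
  hence "(?r1 - ?r2) \<bullet> (?r1 - ?r2) = 0" using ORTH[OF finite_set dd dd sp] by simp
  hence "?r1 - ?r2 = 0\<^sub>v (dim_row X)" using sq_norm_zero_iff[OF dd] unfolding sq_norm_def by simp
  note eq = this
  show ?thesis
  proof (rule eq_vecI)
    fix i assume "i < dim_vec ?r2"
    hence i: "i < dim_row X" using r2 by simp
    have "(?r1 - ?r2) $ i = 0" using eq i by simp
    thus "?r1 $ i = ?r2 $ i" using i r1 r2 by simp
  qed (use r1 r2 in simp)
qed

lemma length_omp_indices[simp]: "length (omp_indices X y k) = k"
  by (induction k) (simp_all add: Let_def)

lemma omp_indices_Suc: "omp_indices X y (Suc k) = omp_indices X y k @ [omp_select X (omp_res X y k)]"
  by (simp add: Let_def omp_res_def)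

lemma omp_indices_prefix: "k \<le> m \<Longrightarrow> take k (omp_indices X y m) = omp_indices X y k"
proof (induction m)
  case 0 thus ?case by simp
next
  case (Suc m)
  show ?case
  proof (cases "k = Suc m")
    case True
    have "length (omp_indices X y (Suc m)) \<le> Suc m" by (simp only: length_omp_indices)
    thus ?thesis unfolding True by (rule take_all)
  next
    case False
    hence "k \<le> m" using Suc.prems by simp
    thus ?thesis using Suc.IH unfolding omp_indices_Suc by simp
  qed
qed

lemma omp_select_prop:
  assumes p: "0 < dim_col X"
  shows "omp_select X r < dim_col X \<and>
    (\<forall>s<dim_col X. \<bar>col X s \<bullet> r\<bar> \<le> \<bar>col X (omp_select X r) \<bullet> r\<bar>)"
proof -
  let ?f = "\<lambda>s. \<bar>col X s \<bullet> r\<bar>"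
  have ne: "?f ` {..<dim_col X} \<noteq> {}" using p by auto
  obtain t where t: "t \<in> {..<dim_col X}" "?f t = Max (?f ` {..<dim_col X})"
    using Max_in[OF finite_imageI[OF finite_lessThan] ne] by auto
  have "\<forall>s<dim_col X. ?f s \<le> ?f t" using t(2) by auto
  hence ex: "\<exists>t. t < dim_col X \<and> (\<forall>s<dim_col X. ?f s \<le> ?f t)" using t(1) by auto
  show ?thesis unfolding omp_select_def by (rule LeastI_ex[OF ex])
qed

lemma omp_select_scale:
  assumes c: "c > 0" and r: "r \<in> carrier_vec (dim_row X)"
  shows "omp_select X (c \<cdot>\<^sub>v r) = omp_select X r"
proof -
  have "\<And>s. \<bar>col X s \<bullet> (c \<cdot>\<^sub>v r)\<bar> = c * \<bar>col X s \<bullet> r\<bar>"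
    using r c by (simp add: col_def abs_mult)
  thus ?thesis unfolding omp_select_def using c by simp
qed

lemma omp_indices_bound: "0 < dim_col X \<Longrightarrow> set (omp_indices X y k) \<subseteq> {..<dim_col X}"
  by (induction k) (auto simp: Let_def omp_select_prop)




lemma erc_bound:
  assumes fr: "full_col_rank (col_sub X IL)" and ne: "IL \<noteq> []"
    and a: "a \<in> carrier_vec (length IL)" and xj: "xj \<in> carrier_vec (dim_row X)"
  shows "\<bar>xj \<bullet> (col_sub X IL *\<^sub>v a)\<bar> \<le>
     l1_norm (pinv (col_sub X IL) *\<^sub>v xj) * Max ((\<lambda>i. \<bar>col X i \<bullet> (col_sub X IL *\<^sub>v a)\<bar>) ` set IL)"
proof -
  let ?n = "dim_row X" and ?m = "length IL"
  let ?A = "col_sub X IL"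
  let ?u = "?A *\<^sub>v a"
  let ?Mx = "Max ((\<lambda>i. \<bar>col X i \<bullet> ?u\<bar>) ` set IL)"
  have A: "?A \<in> carrier_mat ?n ?m" by (rule col_sub_carrier)
  obtain B where B: "mat_inverse (transpose_mat ?A * ?A) = Some B"
    "(transpose_mat ?A * ?A) * B = 1\<^sub>m ?m" "B * (transpose_mat ?A * ?A) = 1\<^sub>m ?m"
    "B \<in> carrier_mat ?m ?m" "transpose_mat B = B"
    using gram_inv[OF A fr] by blast
  have pinv: "pinv ?A = B * transpose_mat ?A" unfolding pinv_def using B(1) by simp
  have At: "transpose_mat ?A \<in> carrier_mat ?m ?n" using A by simp
  have u: "?u \<in> carrier_vec ?n" using A a by (rule mult_mat_vec_carrier)
  define h where "h = transpose_mat ?A *\<^sub>v ?u"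
  have h: "h \<in> carrier_vec ?m" unfolding h_def using At u by (rule mult_mat_vec_carrier)
  have G: "transpose_mat ?A * ?A \<in> carrier_mat ?m ?m" using At A by (rule mult_carrier_mat)
  have aB: "B *\<^sub>v h = a"
  proof -
    have "B *\<^sub>v h = B *\<^sub>v ((transpose_mat ?A * ?A) *\<^sub>v a)"
      unfolding h_def using assoc_mult_mat_vec[OF At A a] by simp
    also have "\<dots> = (B * (transpose_mat ?A * ?A)) *\<^sub>v a" by (rule assoc_mult_mat_vec[OF B(4) G a, symmetric])
    also have "\<dots> = a" unfolding B(3) using a by simp
    finally show ?thesis .
  qed
  have Atx: "transpose_mat ?A *\<^sub>v xj \<in> carrier_vec ?m" using At xj by (rule mult_mat_vec_carrier)
  define g where "g = pinv ?A *\<^sub>v xj"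
  have gB: "g = B *\<^sub>v (transpose_mat ?A *\<^sub>v xj)" unfolding g_def pinv by (rule assoc_mult_mat_vec[OF B(4) At xj])
  have g: "g \<in> carrier_vec ?m" unfolding gB using B(4) Atx by (rule mult_mat_vec_carrier)
  have "xj \<bullet> ?u = (transpose_mat ?A *\<^sub>v xj) \<bullet> a" using transpose_vec_mult_scalar[OF A a xj] by simp
  also have "\<dots> = (transpose_mat ?A *\<^sub>v xj) \<bullet> (B *\<^sub>v h)" unfolding aB ..
  also have "\<dots> = (transpose_mat B *\<^sub>v (transpose_mat ?A *\<^sub>v xj)) \<bullet> h"
    using transpose_vec_mult_scalar[OF B(4) h Atx] by simp
  also have "\<dots> = g \<bullet> h" unfolding gB B(5) ..
  finally have eq: "xj \<bullet> ?u = g \<bullet> h" .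
  have hl: "\<bar>h $ l\<bar> \<le> ?Mx" if l: "l < ?m" for l
  proof -
    have "h $ l = col ?A l \<bullet> ?u" unfolding h_def using l A by simp
    also have "\<dots> = col X (IL!l) \<bullet> ?u" using col_col_sub[OF l] by simp
    finally have "\<bar>h $ l\<bar> = \<bar>col X (IL!l) \<bullet> ?u\<bar>" by simp
    also have "\<dots> \<le> ?Mx" using l by (intro Max_ge) auto
    finally show ?thesis .
  qed
  have "\<bar>g \<bullet> h\<bar> = \<bar>\<Sum>l<?m. g $ l * h $ l\<bar>" unfolding scalar_prod_def using h by (simp add: atLeast0LessThan)
  also have "\<dots> \<le> (\<Sum>l<?m. \<bar>g $ l * h $ l\<bar>)" by (rule sum_abs)
  also have "\<dots> \<le> (\<Sum>l<?m. \<bar>g $ l\<bar> * ?Mx)"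
    by (rule sum_mono) (simp add: abs_mult hl mult_left_mono)
  also have "\<dots> = l1_norm g * ?Mx" unfolding l1_norm_def using g by (simp add: sum_distrib_right)
  finally show ?thesis unfolding eq g_def .
qed

locale omp_setup =
  fixes X :: "real mat" and \<beta> :: "real Matrix.vec" and I :: "nat set" and n p k0 :: nat
  assumes X_dim: "X \<in> carrier_mat n p"
    and beta_dim: "\<beta> \<in> carrier_vec p"
    and unit_cols: "\<forall>j<p. sq_norm (col X j) = 1"
    and supp: "I = {j. j < p \<and> \<beta> $ j \<noteq> 0}"
    and card_I: "card I = k0" and k0_pos: "k0 \<ge> 1"
    and ERC_rank: "full_col_rank (col_sub X (sorted_list_of_set I))"
    and ERC: "\<forall>j<p. j \<notin> I \<longrightarrow>
                 l1_norm (pinv (col_sub X (sorted_list_of_set I)) *\<^sub>v col X j) < 1"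
begin

definition "Xb = X *\<^sub>v \<beta>"
definition "IL = sorted_list_of_set I"
definition "JJ = {J. distinct J \<and> set J \<subset> I}"
definition "rJ J = omp_resid X Xb J"
definition "MJ J = Max ((\<lambda>i. \<bar>col X i \<bullet> rJ J\<bar>) ` I)"
definition "cmin = Min ((\<lambda>J. sq_norm (rJ J)) ` JJ)"
definition "mmin = Min (MJ ` JJ)"
definition "rho = Max ((\<lambda>j. l1_norm (pinv (col_sub X IL) *\<^sub>v col X j)) ` {j. j < p \<and> j \<notin> I} \<union> {0})"

lemma dims[simp]: "dim_row X = n" "dim_col X = p"
  using X_dim by auto

lemma I_fin: "finite I" and I_sub: "I \<subseteq> {..<p}" and I_ne: "I \<noteq> {}" and p_pos: "0 < p"
proof -
  show I_sub: "I \<subseteq> {..<p}" using supp by auto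
  show fin: "finite I" using I_sub finite_subset by blast
  show ne: "I \<noteq> {}" using card_I k0_pos by auto
  thus "0 < p" using I_sub by auto
qed

lemma IL: "set IL = I" "distinct IL" "length IL = k0" "IL \<noteq> []"
  unfolding IL_def using I_fin card_I I_ne by auto

lemma col_carrier: "col X j \<in> carrier_vec n"
  unfolding col_def by simp

lemma Xb_carrier: "Xb \<in> carrier_vec n"
  unfolding Xb_def using X_dim beta_dim by simp

lemma Xb_span: "in_span X I Xb"
proof -
  have "\<forall>i<dim_row X. Xb $ i = (\<Sum>x\<in>I. X $$ (i,x) * \<beta> $ x)"
  proof (intro allI impI)
    fix i assume i: "i < dim_row X"
    have "Xb $ i = (\<Sum>j\<in>{0..<p}. X $$ (i,j) * \<beta> $ j)"
      unfolding Xb_def using i X_dim beta_dim by (simp add: scalar_prod_def row_def)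
    also have "\<dots> = (\<Sum>x\<in>I. X $$ (i,x) * \<beta> $ x)"
      using I_sub supp by (intro sum.mono_neutral_right) auto
    finally show "Xb $ i = (\<Sum>x\<in>I. X $$ (i,x) * \<beta> $ x)" .
  qed
  thus ?thesis unfolding in_span_def by (rule exI[of _ "\<lambda>x. \<beta> $ x"])
qed

lemma indep_I: "indep X I"
  using FR_indep[OF ERC_rank] by (simp add: IL(1)[unfolded IL_def])

lemma okl_sub: "distinct J \<Longrightarrow> set J \<subseteq> I \<Longrightarrow> okl X J"
  unfolding okl_def using indep_FR indep_mono[OF indep_I _ I_fin] by blast

lemma JJ_fin: "finite JJ"
proof -
  have "JJ \<subseteq> {xs. set xs \<subseteq> I \<and> distinct xs}" unfolding JJ_def by auto
  thus ?thesis using finite_subset finite_subset_distinct[OF I_fin] by blast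
qed

lemma JJ_nil: "[] \<in> JJ"
  unfolding JJ_def using I_ne by auto

lemma rJ_carrier: "rJ J \<in> carrier_vec n"
  unfolding rJ_def using resid_carrier[of Xb X J] Xb_carrier by simp

lemma rJ_span: assumes "J \<in> JJ" shows "in_span X I (rJ J)"
proof -
  have ok: "okl X J" using assms okl_sub unfolding JJ_def by auto
  have Xb: "Xb \<in> carrier_vec (dim_row X)" using Xb_carrier by simp
  have d: "Xb - rJ J \<in> carrier_vec (dim_row X)" using Xb rJ_carrier by simp
  have s1: "in_span X I (Xb - rJ J)"
    using in_span_mono[OF resid_facts(2)[OF ok Xb] _ I_fin] assms unfolding JJ_def rJ_def by auto
  have "in_span X I (Xb - (Xb - rJ J))" by (rule in_span_diff[OF Xb_span s1 Xb d])
  moreover have "Xb - (Xb - rJ J) = rJ J" using Xb rJ_carrier by (intro eq_vecI) auto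
  ultimately show ?thesis by simp
qed

lemma rJ_nonzero: assumes J: "J \<in> JJ" shows "rJ J \<noteq> 0\<^sub>v n"
proof
  assume r0: "rJ J = 0\<^sub>v n"
  have ok: "okl X J" using J okl_sub unfolding JJ_def by auto
  have Xb: "Xb \<in> carrier_vec (dim_row X)" using Xb_carrier by simp
  have "Xb - rJ J = Xb" using r0 Xb by simp
  hence "in_span X (set J) Xb" using resid_facts(2)[OF ok Xb] unfolding rJ_def by simp
  then obtain d where d: "\<forall>i<dim_row X. Xb $ i = (\<Sum>x\<in>set J. X $$ (i,x) * d x)"
    unfolding in_span_def by auto
  obtain x0 where x0: "x0 \<in> I" "x0 \<notin> set J" using J unfolding JJ_def by auto
  define c where "c = (\<lambda>x. \<beta> $ x - (if x \<in> set J then d x else 0))"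
  have "\<forall>i<dim_row X. (\<Sum>x\<in>I. X $$ (i,x) * c x) = 0"
  proof (intro allI impI)
    fix i assume i: "i < dim_row X"
    have "(\<Sum>x\<in>I. X $$ (i,x) * c x) = (\<Sum>x\<in>I. X $$ (i,x) * \<beta> $ x) - (\<Sum>x\<in>I. X $$ (i,x) * (if x \<in> set J then d x else 0))"
      unfolding c_def by (simp add: right_diff_distrib sum_subtractf)
    also have "(\<Sum>x\<in>I. X $$ (i,x) * \<beta> $ x) = Xb $ i"
    proof -
      have "Xb $ i = (\<Sum>j\<in>{0..<p}. X $$ (i,j) * \<beta> $ j)"
        unfolding Xb_def using i X_dim beta_dim by (simp add: scalar_prod_def row_def)
      also have "\<dots> = (\<Sum>x\<in>I. X $$ (i,x) * \<beta> $ x)"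
        using I_sub supp by (intro sum.mono_neutral_right) auto
      finally show ?thesis by simp
    qed
    also have "(\<Sum>x\<in>I. X $$ (i,x) * (if x \<in> set J then d x else 0)) = (\<Sum>x\<in>set J. X $$ (i,x) * (if x \<in> set J then d x else 0))"
      using J I_fin unfolding JJ_def by (intro sum.mono_neutral_right) auto
    also have "\<dots> = (\<Sum>x\<in>set J. X $$ (i,x) * d x)" by (rule sum.cong) auto
    also have "\<dots> = Xb $ i" using d i by simp
    finally show "(\<Sum>x\<in>I. X $$ (i,x) * c x) = 0" by simp
  qed
  hence "c x0 = 0" using indep_I x0 unfolding indep_def by blast
  hence "\<beta> $ x0 = 0" using x0 unfolding c_def by simp
  thus False using x0 supp by auto
qed

end



context omp_setup begin

lemma JJ_ok: "J \<in> JJ \<Longrightarrow> okl X J"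
  using okl_sub unfolding JJ_def by auto

lemma MJ_pos: assumes J: "J \<in> JJ" shows "MJ J > 0"
proof -
  let ?r = "rJ J"
  have r: "?r \<in> carrier_vec (dim_row X)" using rJ_carrier by simp
  have "\<exists>i\<in>I. col X i \<bullet> ?r \<noteq> 0"
  proof (rule ccontr)
    assume "\<not> ?thesis"
    hence "\<forall>i\<in>I. col X i \<bullet> ?r = 0" by blast
    hence "?r \<bullet> ?r = 0" using ORTH[OF I_fin r r rJ_span[OF J]] by simp
    hence "?r = 0\<^sub>v n" using sq_norm_zero_iff[of ?r n] rJ_carrier unfolding sq_norm_def by simp
    thus False using rJ_nonzero[OF J] by simp
  qed
  then obtain i where i: "i \<in> I" "col X i \<bullet> ?r \<noteq> 0" by blast
  have "0 < \<bar>col X i \<bullet> ?r\<bar>" using i by simp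
  also have "\<dots> \<le> MJ J" unfolding MJ_def using i I_fin by (intro Max_ge) auto
  finally show ?thesis .
qed

lemma cmin_pos: "cmin > 0" and cmin_le: "J \<in> JJ \<Longrightarrow> cmin \<le> sq_norm (rJ J)"
proof -
  have ne: "(\<lambda>J. sq_norm (rJ J)) ` JJ \<noteq> {}" using JJ_nil by auto
  have "\<forall>J\<in>JJ. 0 < sq_norm (rJ J)" using rJ_nonzero sq_norm_pos rJ_carrier by blast
  thus "cmin > 0" unfolding cmin_def using Min_gr_iff[OF finite_imageI[OF JJ_fin] ne] by auto
  show "J \<in> JJ \<Longrightarrow> cmin \<le> sq_norm (rJ J)" unfolding cmin_def using JJ_fin by (intro Min_le) auto
qed

lemma mmin_pos: "mmin > 0" and mmin_le: "J \<in> JJ \<Longrightarrow> mmin \<le> MJ J"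
proof -
  have ne: "MJ ` JJ \<noteq> {}" using JJ_nil by auto
  have "\<forall>J\<in>JJ. 0 < MJ J" using MJ_pos by blast
  thus "mmin > 0" unfolding mmin_def using Min_gr_iff[OF finite_imageI[OF JJ_fin] ne] by auto
  show "J \<in> JJ \<Longrightarrow> mmin \<le> MJ J" unfolding mmin_def using JJ_fin by (intro Min_le) auto
qed

lemma rho_nonneg: "0 \<le> rho" and rho_lt1: "rho < 1"
  and rho_ge: "j < p \<Longrightarrow> j \<notin> I \<Longrightarrow> l1_norm (pinv (col_sub X IL) *\<^sub>v col X j) \<le> rho"
proof -
  let ?S = "(\<lambda>j. l1_norm (pinv (col_sub X IL) *\<^sub>v col X j)) ` {j. j < p \<and> j \<notin> I} \<union> {0}"
  have fin: "finite ?S" by simp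
  show "0 \<le> rho" unfolding rho_def by (rule Max_ge[OF fin]) simp
  show "j < p \<Longrightarrow> j \<notin> I \<Longrightarrow> l1_norm (pinv (col_sub X IL) *\<^sub>v col X j) \<le> rho"
    unfolding rho_def by (rule Max_ge[OF fin]) simp
  have "rho \<in> ?S" unfolding rho_def by (rule Max_in[OF fin]) simp
  thus "rho < 1" using ERC unfolding IL_def by auto
qed

lemma erc_step: assumes J: "J \<in> JJ" and j: "j < p" "j \<notin> I"
  shows "\<bar>col X j \<bullet> rJ J\<bar> \<le> rho * MJ J"
proof -
  have r: "rJ J \<in> carrier_vec (dim_row X)" using rJ_carrier by simp
  obtain a where a: "a \<in> carrier_vec (length IL)" "rJ J = col_sub X IL *\<^sub>v a"
    using in_span_to_col_sub[OF IL(2) _ r] rJ_span[OF J] IL(1) by auto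
  have fr: "full_col_rank (col_sub X IL)" using ERC_rank unfolding IL_def .
  have "\<bar>col X j \<bullet> rJ J\<bar> \<le> l1_norm (pinv (col_sub X IL) *\<^sub>v col X j) * MJ J"
    using erc_bound[OF fr IL(4) a(1), of "col X j"] col_carrier a(2) IL(1)
    unfolding MJ_def by simp
  also have "\<dots> \<le> rho * MJ J"
    using rho_ge[OF j] MJ_pos[OF J] by (intro mult_right_mono) auto
  finally show ?thesis .
qed

definition "eps1 = (1 - rho) * mmin / 2"

lemma eps1_pos: "eps1 > 0"
  unfolding eps1_def using rho_lt1 mmin_pos by simp

lemma col_noise:
  assumes J: "J \<in> JJ" and e: "e \<in> carrier_vec n" and x: "x < p"
  shows "\<bar>col X x \<bullet> omp_resid X (Xb + e) J - col X x \<bullet> rJ J\<bar> \<le> sqrt (sq_norm e)"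
proof -
  have ok: "okl X J" using JJ_ok[OF J] .
  have Xb: "Xb \<in> carrier_vec (dim_row X)" using Xb_carrier by simp
  have e': "e \<in> carrier_vec (dim_row X)" using e by simp
  let ?re = "omp_resid X e J"
  have re: "?re \<in> carrier_vec n" using resid_carrier[OF e'] by simp
  have "omp_resid X (Xb + e) J = rJ J + ?re" unfolding rJ_def by (rule resid_add[OF Xb e'])
  hence "col X x \<bullet> omp_resid X (Xb + e) J = col X x \<bullet> rJ J + col X x \<bullet> ?re"
    using scalar_prod_add_distrib[OF col_carrier rJ_carrier re] by simp
  hence "\<bar>col X x \<bullet> omp_resid X (Xb + e) J - col X x \<bullet> rJ J\<bar> = \<bar>col X x \<bullet> ?re\<bar>" by simp
  also have "\<dots> \<le> sqrt (sq_norm (col X x)) * sqrt (sq_norm ?re)" by (rule CS_abs[OF col_carrier re])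
  also have "\<dots> = sqrt (sq_norm ?re)" using unit_cols x by simp
  also have "\<dots> \<le> sqrt (sq_norm e)" using resid_le[OF ok e'] by simp
  finally show ?thesis .
qed

lemma step_select:
  assumes e: "e \<in> carrier_vec n" and ne: "sqrt (sq_norm e) < eps1" and J: "J \<in> JJ"
  shows "omp_select X (omp_resid X (Xb + e) J) \<in> I - set J"
proof -
  let ?R = "omp_resid X (Xb + e) J" and ?ne = "sqrt (sq_norm e)"
  let ?t = "omp_select X ?R"
  have sel: "?t < p" "\<forall>s<p. \<bar>col X s \<bullet> ?R\<bar> \<le> \<bar>col X ?t \<bullet> ?R\<bar>"
    using omp_select_prop[of X ?R] p_pos by auto
  have fin: "finite ((\<lambda>i. \<bar>col X i \<bullet> rJ J\<bar>) ` I)" using I_fin by simp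
  have "MJ J \<in> (\<lambda>i. \<bar>col X i \<bullet> rJ J\<bar>) ` I" unfolding MJ_def by (rule Max_in[OF fin]) (use I_ne in simp)
  then obtain i0 where i0: "i0 \<in> I" "\<bar>col X i0 \<bullet> rJ J\<bar> = MJ J" by auto
  have i0p: "i0 < p" using i0 I_sub by auto
  have "\<bar>col X i0 \<bullet> ?R\<bar> \<ge> MJ J - ?ne" using col_noise[OF J e i0p] i0(2) by linarith
  hence big: "\<bar>col X ?t \<bullet> ?R\<bar> \<ge> MJ J - ?ne" using sel(2) i0p by force
  have MJm: "mmin \<le> MJ J" using mmin_le[OF J] .
  have r0: "0 \<le> rho" "rho < 1" using rho_nonneg rho_lt1 by auto
  have "(1 - rho) * mmin \<le> (1 - rho) * MJ J" using MJm r0 by (intro mult_left_mono) auto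
  hence key: "2 * ?ne < MJ J - rho * MJ J" using ne unfolding eps1_def by (simp add: algebra_simps)
  have rM: "0 \<le> rho * MJ J" using r0 MJ_pos[OF J] by simp
  have "?t \<in> I"
  proof (rule ccontr)
    assume "?t \<notin> I"
    hence "\<bar>col X ?t \<bullet> rJ J\<bar> \<le> rho * MJ J" using erc_step[OF J sel(1)] by simp
    hence "\<bar>col X ?t \<bullet> ?R\<bar> \<le> rho * MJ J + ?ne" using col_noise[OF J e sel(1)] by linarith
    thus False using big key by linarith
  qed
  moreover have "?t \<notin> set J"
  proof
    assume tJ: "?t \<in> set J"
    have Xbe: "Xb + e \<in> carrier_vec (dim_row X)" using Xb_carrier e by simp
    have "col X ?t \<bullet> ?R = 0" using resid_facts(1)[OF JJ_ok[OF J] Xbe] tJ by blast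
    hence "MJ J - ?ne \<le> 0" using big by simp
    moreover have "0 \<le> ?ne" using sq_norm_nonneg[of e] by simp
    ultimately show False using key rM by linarith
  qed
  ultimately show ?thesis by simp
qed

abbreviation "LL e k \<equiv> omp_indices X (Xb + e) k"

lemma recover:
  assumes e: "e \<in> carrier_vec n" and ne: "sqrt (sq_norm e) < eps1"
  shows "k \<le> k0 \<Longrightarrow> distinct (LL e k) \<and> set (LL e k) \<subseteq> I"
proof (induction k)
  case 0 thus ?case by simp
next
  case (Suc k)
  hence IH: "distinct (LL e k)" "set (LL e k) \<subseteq> I" by auto
  have "card (set (LL e k)) = k" using distinct_card[OF IH(1)] by simp
  hence "set (LL e k) \<noteq> I" using Suc.prems card_I by auto
  hence J: "LL e k \<in> JJ" unfolding JJ_def using IH by auto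
  have "omp_select X (omp_resid X (Xb + e) (LL e k)) \<in> I - set (LL e k)"
    by (rule step_select[OF e ne J])
  thus ?case using IH by (simp add: Let_def)
qed

lemma recover_JJ:
  assumes e: "e \<in> carrier_vec n" and ne: "sqrt (sq_norm e) < eps1" and k: "k < k0"
  shows "LL e k \<in> JJ"
proof -
  have IH: "distinct (LL e k)" "set (LL e k) \<subseteq> I" using recover[OF e ne] k by auto
  have "card (set (LL e k)) = k" using distinct_card[OF IH(1)] by simp
  hence "set (LL e k) \<noteq> I" using k card_I by auto
  thus ?thesis unfolding JJ_def using IH by auto
qed

lemma recover_full:
  assumes e: "e \<in> carrier_vec n" and ne: "sqrt (sq_norm e) < eps1"
  shows "distinct (LL e k0)" "set (LL e k0) = I"
proof -
  have IH: "distinct (LL e k0)" "set (LL e k0) \<subseteq> I" using recover[OF e ne] by auto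
  have "card (set (LL e k0)) = card I" using distinct_card[OF IH(1)] card_I by simp
  thus "set (LL e k0) = I" using card_subset_eq[OF I_fin IH(2)] by simp
  show "distinct (LL e k0)" by (rule IH(1))
qed

end



lemma sq_from_sqrt: "0 \<le> a \<Longrightarrow> a \<le> sqrt x \<Longrightarrow> 0 \<le> x \<Longrightarrow> a^2 \<le> x"
  using power_mono[of a "sqrt x" 2] by simp

lemma sq_le_from_sqrt: "sqrt x \<le> a \<Longrightarrow> 0 \<le> x \<Longrightarrow> x \<le> a^2"
  using power_mono[of "sqrt x" a 2] by simp

context omp_setup begin

definition "sc = sqrt cmin"
definition "Lb = (cmin / 4) / (sqrt (sq_norm Xb) + sc / 2)^2"
definition "delta0 = min (eps1^2) (min (cmin / 4) (Lb * cmin / 4))"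

lemma sc_pos: "sc > 0" unfolding sc_def using cmin_pos by simp
lemma sc_sq: "sc^2 = cmin" unfolding sc_def using cmin_pos by simp

lemma Lb_pos: "Lb > 0"
proof -
  have "sqrt (sq_norm Xb) + sc / 2 > 0" using sc_pos sq_norm_nonneg[of Xb] by (simp add: add_nonneg_pos)
  thus ?thesis unfolding Lb_def using cmin_pos by simp
qed

lemma delta0_pos: "delta0 > 0"
  unfolding delta0_def using eps1_pos cmin_pos Lb_pos by simp

lemma small_noise:
  assumes "sq_norm e < delta0"
  shows "sqrt (sq_norm e) < eps1" "sqrt (sq_norm e) < sc / 2" "4 * sq_norm e / cmin < Lb"
proof -
  have nn: "0 \<le> sq_norm e" by (rule sq_norm_nonneg)
  have "sq_norm e < eps1^2" using assms unfolding delta0_def by simp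
  hence "sqrt (sq_norm e) < sqrt (eps1^2)" by (simp only: real_sqrt_less_iff)
  thus "sqrt (sq_norm e) < eps1" using eps1_pos by simp
  have "sq_norm e < (sc/2)^2" using assms sc_sq unfolding delta0_def by (simp add: power_divide)
  hence "sqrt (sq_norm e) < sqrt ((sc/2)^2)" by (simp only: real_sqrt_less_iff)
  thus "sqrt (sq_norm e) < sc / 2" using sc_pos by simp
  have "sq_norm e < Lb * cmin / 4" using assms unfolding delta0_def by simp
  thus "4 * sq_norm e / cmin < Lb" using cmin_pos by (simp add: field_simps)
qed

lemma res_lower:
  assumes e: "e \<in> carrier_vec n" and ne: "sqrt (sq_norm e) \<le> sc / 2" and J: "J \<in> JJ"
  shows "cmin / 4 \<le> sq_norm (omp_resid X (Xb + e) J)"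
proof -
  have ok: "okl X J" using JJ_ok[OF J] .
  have Xb: "Xb \<in> carrier_vec (dim_row X)" using Xb_carrier by simp
  have e': "e \<in> carrier_vec (dim_row X)" using e by simp
  let ?re = "omp_resid X e J"
  have re: "?re \<in> carrier_vec n" using resid_carrier[OF e'] by simp
  have R: "omp_resid X (Xb + e) J = rJ J + ?re" unfolding rJ_def by (rule resid_add[OF Xb e'])
  have "sc \<le> sqrt (sq_norm (rJ J))" unfolding sc_def using cmin_le[OF J] by simp
  moreover have "sqrt (sq_norm ?re) \<le> sqrt (sq_norm e)" using resid_le[OF ok e'] by simp
  moreover have "sqrt (sq_norm (rJ J)) - sqrt (sq_norm ?re) \<le> sqrt (sq_norm (rJ J + ?re))"
    by (rule norm_diff_lower[OF rJ_carrier re])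
  ultimately have "sc / 2 \<le> sqrt (sq_norm (omp_resid X (Xb + e) J))" unfolding R using ne by linarith
  hence "(sc/2)^2 \<le> sq_norm (omp_resid X (Xb + e) J)"
    using sq_from_sqrt sc_pos sq_norm_nonneg by (metis half_gt_zero less_imp_le)
  thus ?thesis using sc_sq by (simp add: power_divide)
qed

lemma omp_res_LL: "omp_res X (Xb + e) k = omp_resid X (Xb + e) (LL e k)"
  unfolding omp_res_def ..

lemma ratio_lower:
  assumes e: "e \<in> carrier_vec n" and small: "sq_norm e < delta0" and k: "1 \<le> k" "k < k0"
  shows "Lb \<le> tf_ratio X (Xb + e) k"
proof -
  note sn = small_noise[OF small]
  have J1: "LL e k \<in> JJ" using recover_JJ[OF e sn(1) k(2)] .
  have J0: "LL e (k - 1) \<in> JJ" using recover_JJ[OF e sn(1)] k by simp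
  let ?num = "sq_norm (omp_res X (Xb + e) k)" and ?den = "sq_norm (omp_res X (Xb + e) (k - 1))"
  have num: "cmin / 4 \<le> ?num" unfolding omp_res_LL using res_lower[OF e _ J1] sn(2) by simp
  have den0: "cmin / 4 \<le> ?den" unfolding omp_res_LL using res_lower[OF e _ J0] sn(2) by simp
  have Xbe: "Xb + e \<in> carrier_vec (dim_row X)" using Xb_carrier e by simp
  have "?den \<le> sq_norm (Xb + e)" unfolding omp_res_LL using resid_le[OF JJ_ok[OF J0] Xbe] .
  moreover have "sqrt (sq_norm (Xb + e)) \<le> sqrt (sq_norm Xb) + sc / 2"
    using norm_triangle[OF Xb_carrier e] sn(2) by linarith
  hence "sq_norm (Xb + e) \<le> (sqrt (sq_norm Xb) + sc / 2)^2"
    by (rule sq_le_from_sqrt) (rule sq_norm_nonneg)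
  ultimately have den: "?den \<le> (sqrt (sq_norm Xb) + sc / 2)^2" by linarith
  have "Lb = (cmin / 4) / (sqrt (sq_norm Xb) + sc / 2)^2" unfolding Lb_def ..
  also have "\<dots> \<le> ?num / ?den"
    by (rule frac_le) (use num den den0 cmin_pos in auto)
  also have "\<dots> = tf_ratio X (Xb + e) k" unfolding tf_ratio_def ..
  finally show ?thesis .
qed

lemma ratio_k0:
  assumes e: "e \<in> carrier_vec n" and small: "sq_norm e < delta0"
  shows "tf_ratio X (Xb + e) k0 \<le> 4 * sq_norm e / cmin"
proof -
  note sn = small_noise[OF small]
  have J0: "LL e (k0 - 1) \<in> JJ" using recover_JJ[OF e sn(1)] k0_pos by simp
  have rf: "distinct (LL e k0)" "set (LL e k0) = I" using recover_full[OF e sn(1)] by auto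
  have ok: "okl X (LL e k0)" using okl_sub rf by simp
  have Xb: "Xb \<in> carrier_vec (dim_row X)" using Xb_carrier by simp
  have e': "e \<in> carrier_vec (dim_row X)" using e by simp
  have z: "omp_resid X Xb (LL e k0) = 0\<^sub>v n" using resid_zero[OF ok Xb] Xb_span rf by simp
  have re: "omp_resid X e (LL e k0) \<in> carrier_vec n" using resid_carrier[OF e'] by simp
  have "omp_resid X (Xb + e) (LL e k0) = omp_resid X Xb (LL e k0) + omp_resid X e (LL e k0)"
    by (rule resid_add[OF Xb e'])
  also have "\<dots> = omp_resid X e (LL e k0)" unfolding z using re by simp
  finally have num: "sq_norm (omp_res X (Xb + e) k0) \<le> sq_norm e"
    unfolding omp_res_LL using resid_le[OF ok e'] by simp
  have den: "cmin / 4 \<le> sq_norm (omp_res X (Xb + e) (k0 - 1))"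
    unfolding omp_res_LL using res_lower[OF e _ J0] sn(2) by simp
  have "tf_ratio X (Xb + e) k0 = sq_norm (omp_res X (Xb + e) k0) / sq_norm (omp_res X (Xb + e) (k0 - 1))"
    unfolding tf_ratio_def ..
  also have "\<dots> \<le> sq_norm e / (cmin / 4)"
    by (rule frac_le) (use num den cmin_pos sq_norm_nonneg in auto)
  also have "\<dots> = 4 * sq_norm e / cmin" by simp
  finally show ?thesis .
qed

lemma fail_incl:
  assumes e: "e \<in> carrier_vec n" and small: "sq_norm e < delta0" and km: "k0 < kmax"
    and F: "tf_omp_fails X (Xb + e) kmax I"
  shows "\<exists>k. k0 < k \<and> k \<le> kmax - 1 \<and> tf_ratio X (Xb + e) k \<le> 4 * sq_norm e / cmin"
proof -
  obtain k where ks: "tf_kstar X (Xb + e) kmax k" and est: "tf_omp_est X (Xb + e) kmax k \<noteq> I"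
    using F unfolding tf_omp_fails_def by blast
  have krange: "1 \<le> k" "k \<le> kmax - 1" and kmin: "\<forall>k'\<in>{1..kmax - 1}. tf_ratio X (Xb + e) k \<le> tf_ratio X (Xb + e) k'"
    using ks unfolding tf_kstar_def by auto
  have "tf_omp_est X (Xb + e) kmax k = set (LL e k)"
    unfolding tf_omp_est_def using omp_indices_prefix[of k kmax] krange by simp
  hence kk0: "k \<noteq> k0" using est recover_full[OF e small_noise(1)[OF small]] by auto
  have k0r: "k0 \<in> {1..kmax - 1}" using k0_pos km by auto
  have le0: "tf_ratio X (Xb + e) k \<le> 4 * sq_norm e / cmin"
    using kmin k0r ratio_k0[OF e small] by force
  have "\<not> k < k0"
  proof
    assume "k < k0"
    hence "Lb \<le> tf_ratio X (Xb + e) k" using ratio_lower[OF e small krange(1)] by simp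
    thus False using le0 small_noise(3)[OF small] by linarith
  qed
  thus ?thesis using kk0 krange le0 by (intro exI[of _ k]) auto
qed

end



context omp_setup begin

lemma resid_scale_sets:
  assumes e1: "e1 \<in> carrier_vec n" and c: "c > 0"
    and ok1: "okl X js1" and ok2: "okl X js2" and S: "set js1 = set js2" and IS: "I \<subseteq> set js1"
  shows "omp_resid X (Xb + c \<cdot>\<^sub>v e1) js2 = c \<cdot>\<^sub>v omp_resid X (Xb + e1) js1"
proof -
  have Xb: "Xb \<in> carrier_vec (dim_row X)" using Xb_carrier by simp
  have e': "e1 \<in> carrier_vec (dim_row X)" using e1 by simp
  have ce: "c \<cdot>\<^sub>v e1 \<in> carrier_vec (dim_row X)" using e1 by simp
  have sp1: "in_span X (set js1) Xb" using in_span_mono[OF Xb_span IS] by simp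
  have z1: "omp_resid X Xb js1 = 0\<^sub>v n" using resid_zero[OF ok1 Xb sp1] by simp
  have z2: "omp_resid X Xb js2 = 0\<^sub>v n" using resid_zero[OF ok2 Xb] sp1 S by simp
  have r1: "omp_resid X e1 js1 \<in> carrier_vec n" using resid_carrier[OF e'] by simp
  have r2: "omp_resid X (c \<cdot>\<^sub>v e1) js2 \<in> carrier_vec n" using resid_carrier[OF ce] by simp
  have "omp_resid X (Xb + c \<cdot>\<^sub>v e1) js2 = omp_resid X Xb js2 + omp_resid X (c \<cdot>\<^sub>v e1) js2"
    by (rule resid_add[OF Xb ce])
  also have "\<dots> = omp_resid X (c \<cdot>\<^sub>v e1) js2" unfolding z2 using r2 by simp
  also have "\<dots> = c \<cdot>\<^sub>v omp_resid X e1 js2" by (rule resid_smult[OF e'])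
  also have "omp_resid X e1 js2 = omp_resid X e1 js1" by (rule resid_same_set[OF ok2 ok1 S[symmetric] e'])
  also have "omp_resid X e1 js1 = omp_resid X Xb js1 + omp_resid X e1 js1" unfolding z1 using r1 by simp
  also have "\<dots> = omp_resid X (Xb + e1) js1" by (rule resid_add[OF Xb e', symmetric])
  finally show ?thesis .
qed

lemma FR_okl: "full_col_rank (col_sub X js) \<Longrightarrow> okl X js"
  unfolding okl_def by simp

lemma scale_inv:
  assumes e1: "e1 \<in> carrier_vec n" and c: "c > 0"
    and n1: "sqrt (sq_norm e1) < eps1" and n2: "sqrt (sq_norm (c \<cdot>\<^sub>v e1)) < eps1"
    and FR1: "\<forall>k\<in>{1..kmax}. full_col_rank (col_sub X (LL e1 k))"
    and kk: "k0 \<le> k" "k \<le> kmax"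
  shows "drop k0 (LL (c \<cdot>\<^sub>v e1) k) = drop k0 (LL e1 k) \<and> full_col_rank (col_sub X (LL (c \<cdot>\<^sub>v e1) k))
     \<and> omp_res X (Xb + c \<cdot>\<^sub>v e1) k = c \<cdot>\<^sub>v omp_res X (Xb + e1) k"
  using kk
proof (induction k rule: dec_induct)
  case base
  have e2: "c \<cdot>\<^sub>v e1 \<in> carrier_vec n" using e1 by simp
  have rf1: "distinct (LL e1 k0)" "set (LL e1 k0) = I" using recover_full[OF e1 n1] by auto
  have rf2: "distinct (LL (c \<cdot>\<^sub>v e1) k0)" "set (LL (c \<cdot>\<^sub>v e1) k0) = I" using recover_full[OF e2 n2] by auto
  have ok1: "okl X (LL e1 k0)" using okl_sub rf1 by simp
  have ok2: "okl X (LL (c \<cdot>\<^sub>v e1) k0)" using okl_sub rf2 by simp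
  have ne: "LL (c \<cdot>\<^sub>v e1) k0 \<noteq> []" using k0_pos by (metis length_omp_indices list.size(3) not_one_le_zero)
  have fr2: "full_col_rank (col_sub X (LL (c \<cdot>\<^sub>v e1) k0))" using ok2 ne unfolding okl_def by simp
  have "omp_res X (Xb + c \<cdot>\<^sub>v e1) k0 = c \<cdot>\<^sub>v omp_res X (Xb + e1) k0"
    unfolding omp_res_LL by (rule resid_scale_sets[OF e1 c ok1 ok2]) (use rf1 rf2 in auto)
  thus ?case using fr2 by simp
next
  case (step k)
  note IH = step.IH[OF Suc_leD[OF step.prems]]
  have e2: "c \<cdot>\<^sub>v e1 \<in> carrier_vec n" using e1 by simp
  have Xbe: "Xb + e1 \<in> carrier_vec (dim_row X)" using Xb_carrier e1 by simp
  have rc: "omp_res X (Xb + e1) k \<in> carrier_vec (dim_row X)" unfolding omp_res_def by (rule resid_carrier[OF Xbe])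
  have sel: "omp_select X (omp_res X (Xb + c \<cdot>\<^sub>v e1) k) = omp_select X (omp_res X (Xb + e1) k)"
    using IH omp_select_scale[OF c rc] by simp
  let ?L1 = "LL e1 (Suc k)" and ?L2 = "LL (c \<cdot>\<^sub>v e1) (Suc k)"
  have L1: "?L1 = LL e1 k @ [omp_select X (omp_res X (Xb + e1) k)]" by (rule omp_indices_Suc)
  have L2: "?L2 = LL (c \<cdot>\<^sub>v e1) k @ [omp_select X (omp_res X (Xb + e1) k)]"
    using omp_indices_Suc[of X "Xb + c \<cdot>\<^sub>v e1" k] sel by simp
  have dr: "drop k0 ?L2 = drop k0 ?L1" unfolding L1 L2 using IH step.hyps by simp
  have tk: "set (take k0 (LL e (Suc k))) = I" if "e \<in> carrier_vec n" "sqrt (sq_norm e) < eps1" for e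
    using omp_indices_prefix[of k0 "Suc k" X "Xb + e"] recover_full[OF that] step.hyps by simp
  have S: "set ?L2 = set ?L1"
  proof -
    have "set ?L2 = set (take k0 ?L2) \<union> set (drop k0 ?L2)" by (metis append_take_drop_id set_append)
    also have "\<dots> = set (take k0 ?L1) \<union> set (drop k0 ?L1)" using tk[OF e2 n2] tk[OF e1 n1] dr by simp
    also have "\<dots> = set ?L1" by (metis append_take_drop_id set_append)
    finally show ?thesis .
  qed
  have "Suc k \<in> {1..kmax}" using step.prems by simp
  hence fr1: "full_col_rank (col_sub X ?L1)" using FR1 by blast
  have d1: "distinct ?L1" "indep X (set ?L1)" using fr1 FR_iff by auto
  have "card (set ?L2) = card (set ?L1)" using S by (simp only:)
  also have "\<dots> = length ?L1" by (rule distinct_card[OF d1(1)])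
  also have "\<dots> = length ?L2" by (simp only: length_omp_indices)
  finally have "card (set ?L2) = length ?L2" .
  hence d2: "distinct ?L2" by (simp add: card_distinct)
  have fr2: "full_col_rank (col_sub X ?L2)" using FR_iff d2 d1(2) S by simp
  have IS: "I \<subseteq> set ?L1" using tk[OF e1 n1] by (metis set_take_subset)
  have "omp_res X (Xb + c \<cdot>\<^sub>v e1) (Suc k) = c \<cdot>\<^sub>v omp_res X (Xb + e1) (Suc k)"
    unfolding omp_res_LL by (rule resid_scale_sets[OF e1 c FR_okl[OF fr1] FR_okl[OF fr2] S[symmetric] IS])
  thus ?case using dr fr2 by simp
qed

lemma ratio_scale:
  assumes e1: "e1 \<in> carrier_vec n" and c: "c > 0"
    and n1: "sqrt (sq_norm e1) < eps1" and n2: "sqrt (sq_norm (c \<cdot>\<^sub>v e1)) < eps1"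
    and FR1: "\<forall>k\<in>{1..kmax}. full_col_rank (col_sub X (LL e1 k))"
    and kk: "k0 < k" "k \<le> kmax"
  shows "tf_ratio X (Xb + c \<cdot>\<^sub>v e1) k = tf_ratio X (Xb + e1) k"
proof -
  have a: "omp_res X (Xb + c \<cdot>\<^sub>v e1) k = c \<cdot>\<^sub>v omp_res X (Xb + e1) k"
    using scale_inv[OF e1 c n1 n2 FR1] kk by simp
  have b: "omp_res X (Xb + c \<cdot>\<^sub>v e1) (k - 1) = c \<cdot>\<^sub>v omp_res X (Xb + e1) (k - 1)"
    using scale_inv[OF e1 c n1 n2 FR1, of "k - 1"] kk by simp
  show ?thesis unfolding tf_ratio_def a b sq_norm_smult using c by simp
qed

end



lemma resid_index:
  assumes y: "y \<in> carrier_vec (dim_row X)" and i: "i < dim_row X"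
  shows "omp_resid X y js $ i = (if js = [] then y $ i else y $ i - (\<Sum>j<dim_row X. proj X js $$ (i,j) * y $ j))"
proof -
  have P: "proj X js \<in> carrier_mat (dim_row X) (dim_row X)" by (rule proj_carrier)
  have "(proj X js *\<^sub>v y) $ i = (\<Sum>j<dim_row X. proj X js $$ (i,j) * y $ j)"
    using P y i by (simp add: scalar_prod_def row_def atLeast0LessThan)
  thus ?thesis unfolding omp_resid_def using P y i by simp
qed

locale meas_setup =
  fixes M :: "'w measure" and E :: "'w \<Rightarrow> real Matrix.vec" and X :: "real mat" and y0 :: "real Matrix.vec"
  assumes E_car: "\<And>w. E w \<in> carrier_vec (dim_row X)"
    and E_meas: "\<And>i. i < dim_row X \<Longrightarrow> (\<lambda>w. E w $ i) \<in> borel_measurable M"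
    and y0_car: "y0 \<in> carrier_vec (dim_row X)"
begin

lemma Y_car: "y0 + E w \<in> carrier_vec (dim_row X)"
  using E_car y0_car by simp

lemma Y_meas: "i < dim_row X \<Longrightarrow> (\<lambda>w. (y0 + E w) $ i) \<in> borel_measurable M"
proof -
  assume i: "i < dim_row X"
  have "(\<lambda>w. (y0 + E w) $ i) = (\<lambda>w. y0 $ i + E w $ i)"
  proof (intro ext)
    fix w show "(y0 + E w) $ i = y0 $ i + E w $ i" using i y0_car E_car[of w] by simp
  qed
  thus ?thesis using E_meas[OF i] by simp
qed

lemma R_meas: "i < dim_row X \<Longrightarrow> (\<lambda>w. omp_resid X (y0 + E w) js $ i) \<in> borel_measurable M"
proof -
  assume i: "i < dim_row X"
  have eq: "(\<lambda>w. omp_resid X (y0 + E w) js $ i) =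
    (\<lambda>w. if js = [] then (y0 + E w) $ i else (y0 + E w) $ i - (\<Sum>j<dim_row X. proj X js $$ (i,j) * (y0 + E w) $ j))"
    using resid_index[OF Y_car i] by (intro ext) simp
  have m: "(\<lambda>w. (\<Sum>j<dim_row X. proj X js $$ (i,j) * (y0 + E w) $ j)) \<in> borel_measurable M"
    by (intro borel_measurable_sum borel_measurable_times measurable_const Y_meas) simp_all
  show ?thesis unfolding eq using m Y_meas[OF i] by (cases "js = []") simp_all
qed

lemma R_car: "omp_resid X (y0 + E w) js \<in> carrier_vec (dim_row X)"
  using resid_carrier[OF Y_car] .

lemma dot_meas: "(\<lambda>w. col X s \<bullet> omp_resid X (y0 + E w) js) \<in> borel_measurable M"
proof -
  have "(\<lambda>w. col X s \<bullet> omp_resid X (y0 + E w) js) = (\<lambda>w. \<Sum>i<dim_row X. X $$ (i,s) * omp_resid X (y0 + E w) js $ i)"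
    using col_dot R_car by (intro ext) blast
  also have "\<dots> \<in> borel_measurable M"
    by (intro borel_measurable_sum borel_measurable_times measurable_const R_meas) simp_all
  finally show ?thesis .
qed

lemma sqn_meas: "(\<lambda>w. sq_norm (omp_resid X (y0 + E w) js)) \<in> borel_measurable M"
proof -
  have "(\<lambda>w. sq_norm (omp_resid X (y0 + E w) js)) = (\<lambda>w. \<Sum>i<dim_row X. omp_resid X (y0 + E w) js $ i * omp_resid X (y0 + E w) js $ i)"
  proof (intro ext)
    fix w show "sq_norm (omp_resid X (y0 + E w) js) = (\<Sum>i<dim_row X. omp_resid X (y0 + E w) js $ i * omp_resid X (y0 + E w) js $ i)"
      unfolding sq_norm_def scalar_prod_def using R_car[of w js] by (simp add: atLeast0LessThan)
  qed
  also have "\<dots> \<in> borel_measurable M"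
    by (intro borel_measurable_sum borel_measurable_times R_meas) simp_all
  finally show ?thesis .
qed

lemma sel_meas: "(\<lambda>w. omp_select X (omp_resid X (y0 + E w) js)) \<in> measurable M (count_space UNIV)"
  unfolding omp_select_def
proof (rule measurable_Least)
  fix t
  have [measurable]: "\<And>s. (\<lambda>w. col X s \<bullet> omp_resid X (y0 + E w) js) \<in> borel_measurable M" by (rule dot_meas)
  show "Measurable.pred M (\<lambda>w. t < dim_col X \<and> (\<forall>s<dim_col X. \<bar>col X s \<bullet> omp_resid X (y0 + E w) js\<bar> \<le> \<bar>col X t \<bullet> omp_resid X (y0 + E w) js\<bar>))"
    by measurable
qed

lemma ind_meas: "(\<lambda>w. omp_indices X (y0 + E w) k) \<in> measurable M (count_space UNIV)"
proof (induction k)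
  case 0 thus ?case by simp
next
  case (Suc k)
  have eq: "(\<lambda>w. omp_indices X (y0 + E w) (Suc k)) =
     (\<lambda>w. (\<lambda>js w. js @ [omp_select X (omp_resid X (y0 + E w) js)]) (omp_indices X (y0 + E w) k) w)"
    by (simp add: Let_def)
  show ?case unfolding eq
  proof (rule measurable_compose_countable[OF _ Suc.IH])
    fix js :: "nat list"
    show "(\<lambda>w. js @ [omp_select X (omp_resid X (y0 + E w) js)]) \<in> measurable M (count_space UNIV)"
      using measurable_compose[OF sel_meas[of js], of "\<lambda>t. js @ [t]" "count_space UNIV"]
      by (simp add: measurable_count_space_eq1)
  qed
qed

lemma ratio_meas: "(\<lambda>w. tf_ratio X (y0 + E w) k) \<in> borel_measurable M"
proof -
  have a: "(\<lambda>w. sq_norm (omp_res X (y0 + E w) m)) \<in> borel_measurable M" for m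
  proof -
    have "(\<lambda>w. sq_norm (omp_res X (y0 + E w) m)) =
      (\<lambda>w. (\<lambda>js w. sq_norm (omp_resid X (y0 + E w) js)) (omp_indices X (y0 + E w) m) w)"
      unfolding omp_res_def ..
    also have "\<dots> \<in> borel_measurable M"
      by (rule measurable_compose_countable[OF sqn_meas ind_meas])
    finally show ?thesis .
  qed
  show ?thesis unfolding tf_ratio_def using a[of k] a[of "k - 1"] by (rule borel_measurable_divide)
qed

end



lemma gauss_prob: "s > 0 \<Longrightarrow> prob_space (gauss_noise n s)"
  unfolding gauss_noise_def by (rule prob_space_PiM) (rule prob_space_normal_density, simp)

lemma gauss_sets: "sets (gauss_noise n s) = sets (Pi\<^sub>M {..<n} (\<lambda>_. borel :: real measure))"
  unfolding gauss_noise_def by (rule sets_PiM_cong) auto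

lemma gauss_space: "space (gauss_noise n s) = space (Pi\<^sub>M {..<n} (\<lambda>_. borel :: real measure))"
  using gauss_sets by (rule sets_eq_imp_space_eq)

lemma gauss_sets_eq: "sets (gauss_noise n s) = sets (gauss_noise n t)"
  using gauss_sets by simp

lemma gauss_comp_meas: "i < n \<Longrightarrow> (\<lambda>w. w i) \<in> borel_measurable (gauss_noise n s)"
proof -
  assume i: "i < n"
  have "(\<lambda>w. w i) \<in> measurable (gauss_noise n s) (density lborel (\<lambda>x. ennreal (normal_density 0 (sqrt s) x)))"
    unfolding gauss_noise_def using measurable_component_singleton[of i "{..<n}"] i by simp
  moreover have "measurable (gauss_noise n s) (density lborel (\<lambda>x. ennreal (normal_density 0 (sqrt s) x)))
     = measurable (gauss_noise n s) borel" by (rule measurable_cong_sets) auto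
  ultimately show ?thesis by simp
qed

lemma normal_scale:
  assumes s: "s > 0"
  shows "distr (density lborel (\<lambda>x. ennreal (normal_density 0 1 x)))
               (density lborel (\<lambda>x. ennreal (normal_density 0 (sqrt s) x))) (\<lambda>x. sqrt s * x)
       = density lborel (\<lambda>x. ennreal (normal_density 0 (sqrt s) x))"
proof -
  let ?N1 = "density lborel (\<lambda>x. ennreal (normal_density 0 1 x))"
  have P: "prob_space ?N1" by (rule prob_space_normal_density) simp
  have D: "distributed ?N1 lborel (\<lambda>x. x) (\<lambda>x. ennreal (normal_density 0 1 x))"
    unfolding distributed_def
    by (auto simp: distr_id2 measurable_ident_sets)
  have "distributed ?N1 lborel (\<lambda>x. 0 + sqrt s * x) (\<lambda>x. ennreal (normal_density (0 + sqrt s * 0) (\<bar>sqrt s\<bar> * 1) x))"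
    by (rule prob_space.normal_density_affine[OF P D]) (use s in auto)
  hence "distr ?N1 lborel (\<lambda>x. sqrt s * x) = density lborel (\<lambda>x. ennreal (normal_density 0 (sqrt s) x))"
    unfolding distributed_def using s by simp
  moreover have "distr ?N1 (density lborel (\<lambda>x. ennreal (normal_density 0 (sqrt s) x))) (\<lambda>x. sqrt s * x)
     = distr ?N1 lborel (\<lambda>x. sqrt s * x)" by (rule distr_cong) auto
  ultimately show ?thesis by simp
qed

lemma gauss_scale:
  assumes s: "s > 0"
  shows "gauss_noise n s = distr (gauss_noise n 1) (gauss_noise n s) (\<lambda>z. \<lambda>i\<in>{..<n}. sqrt s * z i)"
proof -
  let ?N1 = "density lborel (\<lambda>x. ennreal (normal_density 0 1 x))"
  let ?Ns = "density lborel (\<lambda>x. ennreal (normal_density 0 (sqrt s) x))"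
  have "?N1 \<rightarrow>\<^sub>M ?Ns = borel \<rightarrow>\<^sub>M borel" by (rule measurable_cong_sets) auto
  hence f: "(\<lambda>x. sqrt s * x) \<in> ?N1 \<rightarrow>\<^sub>M ?Ns" by simp
  have "distr (Pi\<^sub>M {..<n} (\<lambda>_. ?N1)) (Pi\<^sub>M {..<n} (\<lambda>_. ?Ns)) (compose {..<n} (\<lambda>x. sqrt s * x))
      = Pi\<^sub>M {..<n} (\<lambda>i. distr ?N1 ?Ns (\<lambda>x. sqrt s * x))"
    by (rule distr_PiM_finite_prob_space') (use f s in \<open>auto intro: prob_space_normal_density\<close>)
  also have "\<dots> = gauss_noise n s" unfolding normal_scale[OF s] gauss_noise_def ..
  finally show ?thesis unfolding gauss_noise_def compose_def by simp
qed




locale omp_prob = omp_setup +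
  fixes kmax :: nat
  assumes kmax: "kmax > k0"
    and standing: "\<forall>s>0. AE w in gauss_noise n s. omp_valid X (X *\<^sub>v \<beta> + Matrix.vec n w) kmax"
begin

definition "Ssc s z = (\<lambda>i\<in>{..<n}. sqrt s * z i)"
definition "N2 z = sq_norm (Matrix.vec n z)"
definition "lam z = sqrt delta0 / (2 * (1 + N2 z))"
definition "T k z = tf_ratio X (Xb + Matrix.vec n (\<lambda>i. lam z * z i)) k"
definition "valid w \<longleftrightarrow> omp_valid X (Xb + Matrix.vec n w) kmax"

lemma vec_S: "Matrix.vec n (Ssc s z) = sqrt s \<cdot>\<^sub>v Matrix.vec n z"
  unfolding Ssc_def by (intro eq_vecI) auto

lemma N2_nonneg: "0 \<le> N2 z" unfolding N2_def by (rule sq_norm_nonneg)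

lemma N2_S: "s \<ge> 0 \<Longrightarrow> sq_norm (Matrix.vec n (Ssc s z)) = s * N2 z"
  unfolding vec_S sq_norm_smult N2_def by simp

lemma vec_lam: "Matrix.vec n (\<lambda>i. lam z * z i) = lam z \<cdot>\<^sub>v Matrix.vec n z"
  by (intro eq_vecI) auto

lemma lam_pos: "lam z > 0"
  unfolding lam_def using delta0_pos N2_nonneg[of z] by (simp add: add_pos_nonneg)

lemma lam_small: "sq_norm (lam z \<cdot>\<^sub>v Matrix.vec n z) < delta0"
proof -
  let ?a = "N2 z"
  have a: "0 \<le> ?a" by (rule N2_nonneg)
  have "sq_norm (lam z \<cdot>\<^sub>v Matrix.vec n z) = (lam z)^2 * ?a" unfolding sq_norm_smult N2_def ..
  also have "(lam z)^2 = delta0 / (4 * (1 + ?a)^2)"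
    unfolding lam_def using delta0_pos by (simp add: power_divide power_mult_distrib) (simp add: power2_eq_square algebra_simps)
  also have "delta0 / (4 * (1 + ?a)^2) * ?a < delta0"
  proof -
    have "?a < 4 * (1 + ?a)^2" using a by (simp add: power2_eq_square algebra_simps) (smt (verit) mult_nonneg_nonneg)
    hence "?a / (4 * (1 + ?a)^2) < 1" using a by simp
    hence "delta0 * (?a / (4 * (1 + ?a)^2)) < delta0 * 1" using delta0_pos by (intro mult_strict_left_mono) auto
    thus ?thesis by simp
  qed
  finally show ?thesis .
qed

lemma mu1: "prob_space (gauss_noise n 1)" by (rule gauss_prob) simp

lemma vec_comp_meas: "i < dim_row X \<Longrightarrow> (\<lambda>w. Matrix.vec n w $ i) \<in> borel_measurable (gauss_noise n s)"
proof -
  assume i: "i < dim_row X"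
  hence "(\<lambda>w. Matrix.vec n w $ i) = (\<lambda>w. w i)" by (intro ext) simp
  thus ?thesis using gauss_comp_meas[of i n s] i by simp
qed

lemma N2_meas: "N2 \<in> borel_measurable (gauss_noise n s)"
proof -
  have "N2 = (\<lambda>w. \<Sum>i<n. Matrix.vec n w $ i * Matrix.vec n w $ i)"
    unfolding N2_def sq_norm_def scalar_prod_def by (intro ext) (simp add: atLeast0LessThan)
  also have "\<dots> \<in> borel_measurable (gauss_noise n s)"
    by (intro borel_measurable_sum borel_measurable_times vec_comp_meas) simp_all
  finally show ?thesis .
qed

lemma ms1: "meas_setup (gauss_noise n s) (\<lambda>w. Matrix.vec n w) X Xb"
  by unfold_locales (use vec_comp_meas Xb_carrier in auto)

lemma ms2: "meas_setup (gauss_noise n s) (\<lambda>w. Matrix.vec n (\<lambda>i. lam w * w i)) X Xb"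
proof unfold_locales
  fix i assume i: "i < dim_row X"
  have "(\<lambda>w. Matrix.vec n (\<lambda>i. lam w * w i) $ i) = (\<lambda>w. sqrt delta0 / (2 * (1 + N2 w)) * Matrix.vec n w $ i)"
    using i unfolding lam_def by (intro ext) simp
  also have "\<dots> \<in> borel_measurable (gauss_noise n s)"
    using N2_meas vec_comp_meas[OF i] by measurable
  finally show "(\<lambda>w. Matrix.vec n (\<lambda>i. lam w * w i) $ i) \<in> borel_measurable (gauss_noise n s)" .
qed (use Xb_carrier in auto)

lemma T_meas: "T k \<in> borel_measurable (gauss_noise n s)"
  using meas_setup.ratio_meas[OF ms2] unfolding T_def[abs_def] .

lemma Ssc_meas: "s > 0 \<Longrightarrow> Ssc s \<in> gauss_noise n 1 \<rightarrow>\<^sub>M gauss_noise n s"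
proof -
  have eq: "gauss_noise n 1 \<rightarrow>\<^sub>M gauss_noise n s = Pi\<^sub>M {..<n} (\<lambda>_. borel :: real measure) \<rightarrow>\<^sub>M Pi\<^sub>M {..<n} (\<lambda>_. borel)"
    by (rule measurable_cong_sets) (simp_all add: gauss_sets)
  have "(\<lambda>z. \<lambda>i\<in>{..<n}. sqrt s * z i) \<in> Pi\<^sub>M {..<n} (\<lambda>_. borel :: real measure) \<rightarrow>\<^sub>M Pi\<^sub>M {..<n} (\<lambda>_. borel)"
    by (rule measurable_restrict) measurable
  thus ?thesis unfolding eq Ssc_def .
qed

lemma null_set:
  assumes s: "s > 0"
  obtains N' where "N' \<in> sets (gauss_noise n 1)" "measure (gauss_noise n 1) N' = 0"
    "\<And>z. z \<in> space (gauss_noise n 1) \<Longrightarrow> z \<notin> N' \<Longrightarrow> valid (Ssc s z)"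
proof -
  have "AE w in gauss_noise n s. valid w" using standing s unfolding valid_def Xb_def by blast
  then obtain N where N: "{w \<in> space (gauss_noise n s). \<not> valid w} \<subseteq> N" "emeasure (gauss_noise n s) N = 0"
    "N \<in> sets (gauss_noise n s)" by (rule AE_E)
  define N' where "N' = Ssc s -` N \<inter> space (gauss_noise n 1)"
  have m: "Ssc s \<in> gauss_noise n 1 \<rightarrow>\<^sub>M gauss_noise n s" by (rule Ssc_meas[OF s])
  have "N' \<in> sets (gauss_noise n 1)" unfolding N'_def using measurable_sets[OF m N(3)] .
  moreover have "measure (gauss_noise n 1) N' = 0"
  proof -
    have "measure (gauss_noise n s) N = measure (distr (gauss_noise n 1) (gauss_noise n s) (Ssc s)) N"
      using gauss_scale[OF s, of n] unfolding Ssc_def by simp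
    also have "\<dots> = measure (gauss_noise n 1) N'" unfolding N'_def by (rule measure_distr[OF m N(3)])
    finally show ?thesis using N(2) by (simp add: measure_def)
  qed
  moreover have "valid (Ssc s z)" if "z \<in> space (gauss_noise n 1)" "z \<notin> N'" for z
  proof -
    have "Ssc s z \<in> space (gauss_noise n s)" using measurable_space[OF m that(1)] .
    moreover have "Ssc s z \<notin> N" using that unfolding N'_def by simp
    ultimately show ?thesis using N(1) by blast
  qed
  ultimately show ?thesis using that by blast
qed

lemma T_eq:
  assumes s: "s > 0" and v: "valid (Ssc s z)" and small: "s * N2 z < delta0" and k: "k0 < k" "k \<le> kmax"
  shows "T k z = tf_ratio X (Xb + Matrix.vec n (Ssc s z)) k"
proof -
  let ?e1 = "Matrix.vec n (Ssc s z)"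
  have e1: "?e1 \<in> carrier_vec n" by simp
  have c: "lam z / sqrt s > 0" using lam_pos s by simp
  have ce: "(lam z / sqrt s) \<cdot>\<^sub>v ?e1 = lam z \<cdot>\<^sub>v Matrix.vec n z"
    unfolding vec_S using s by (intro eq_vecI) auto
  have n1: "sqrt (sq_norm ?e1) < eps1" using small_noise(1)[of ?e1] small N2_S[of s z] s by simp
  have n2: "sqrt (sq_norm ((lam z / sqrt s) \<cdot>\<^sub>v ?e1)) < eps1" unfolding ce using small_noise(1)[OF lam_small] .
  have FR1: "\<forall>k\<in>{1..kmax}. full_col_rank (col_sub X (LL ?e1 k))" using v unfolding valid_def omp_valid_def by blast
  have "tf_ratio X (Xb + (lam z / sqrt s) \<cdot>\<^sub>v ?e1) k = tf_ratio X (Xb + ?e1) k"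
    by (rule ratio_scale[OF e1 c n1 n2 FR1 k])
  thus ?thesis unfolding T_def vec_lam ce .
qed

lemma T_pos:
  assumes s: "s > 0" and v: "valid (Ssc s z)" and small: "s * N2 z < delta0" and k: "k0 < k" "k < kmax"
  shows "T k z > 0"
proof -
  let ?y = "Xb + Matrix.vec n (Ssc s z)"
  have "omp_res X ?y k \<noteq> 0\<^sub>v n" "omp_res X ?y (k - 1) \<noteq> 0\<^sub>v n"
    using v k unfolding valid_def omp_valid_def by auto
  moreover have "omp_res X ?y m \<in> carrier_vec n" for m
    unfolding omp_res_def using resid_carrier[of ?y X] Xb_carrier by simp
  ultimately have "sq_norm (omp_res X ?y k) > 0" "sq_norm (omp_res X ?y (k - 1)) > 0"
    using sq_norm_pos by blast+
  hence "tf_ratio X ?y k > 0" unfolding tf_ratio_def by simp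
  thus ?thesis using T_eq[OF s v small] k by simp
qed

lemma fail_T:
  assumes s: "s > 0" and v: "valid (Ssc s z)" and small: "s * N2 z < delta0" and small2: "N2 z < 1 / sqrt s"
    and F: "tf_omp_fails X (Xb + Matrix.vec n (Ssc s z)) kmax I"
  shows "\<exists>k\<in>{Suc k0..<kmax}. T k z \<le> 4 * sqrt s / cmin"
proof -
  let ?e1 = "Matrix.vec n (Ssc s z)"
  have e1: "?e1 \<in> carrier_vec n" by simp
  have sq: "sq_norm ?e1 < delta0" using N2_S[of s z] small s by simp
  obtain k where k: "k0 < k" "k \<le> kmax - 1" "tf_ratio X (Xb + ?e1) k \<le> 4 * sq_norm ?e1 / cmin"
    using fail_incl[OF e1 sq kmax F] by blast
  have "sq_norm ?e1 = s * N2 z" using N2_S[of s z] s by simp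
  also have "\<dots> \<le> s * (1 / sqrt s)" using small2 s by (intro mult_left_mono) auto
  also have "\<dots> = sqrt s" using s by (simp add: real_div_sqrt)
  finally have "4 * sq_norm ?e1 / cmin \<le> 4 * sqrt s / cmin" using cmin_pos by (simp add: divide_right_mono)
  moreover have "T k z = tf_ratio X (Xb + ?e1) k" using T_eq[OF s v small] k kmax by simp
  ultimately show ?thesis using k kmax by (intro bexI[of _ k]) auto
qed

end



context omp_prob begin

definition "tail R = measure (gauss_noise n 1) {z \<in> space (gauss_noise n 1). R \<le> N2 z}"
definition "low k x = measure (gauss_noise n 1) {z \<in> space (gauss_noise n 1). T k z \<le> x}"

lemma cdf_N2: "cdf (distr (gauss_noise n 1) borel N2) x = measure (gauss_noise n 1) {z \<in> space (gauss_noise n 1). N2 z \<le> x}"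
proof -
  have "cdf (distr (gauss_noise n 1) borel N2) x = measure (gauss_noise n 1) (N2 -` {..x} \<inter> space (gauss_noise n 1))"
    unfolding cdf_def by (rule measure_distr[OF N2_meas]) simp
  also have "N2 -` {..x} \<inter> space (gauss_noise n 1) = {z \<in> space (gauss_noise n 1). N2 z \<le> x}" by auto
  finally show ?thesis .
qed

lemma cdf_T: "cdf (distr (gauss_noise n 1) borel (T k)) x = low k x"
proof -
  have "cdf (distr (gauss_noise n 1) borel (T k)) x = measure (gauss_noise n 1) (T k -` {..x} \<inter> space (gauss_noise n 1))"
    unfolding cdf_def by (rule measure_distr[OF T_meas]) simp
  also have "T k -` {..x} \<inter> space (gauss_noise n 1) = {z \<in> space (gauss_noise n 1). T k z \<le> x}" by auto
  finally show ?thesis unfolding low_def .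
qed

lemma tail_lim: "(tail \<longlongrightarrow> 0) at_top"
proof -
  interpret P: prob_space "gauss_noise n 1" by (rule mu1)
  let ?D = "distr (gauss_noise n 1) borel N2"
  have RD: "real_distribution ?D" by (rule P.real_distribution_distr[OF N2_meas])
  have c1: "(cdf ?D \<longlongrightarrow> 1) at_top" by (rule real_distribution.cdf_lim_at_top_prob[OF RD])
  have fl: "filterlim (\<lambda>R. -1 + R) at_top (at_top :: real filter)"
    by (rule filterlim_tendsto_add_at_top[OF tendsto_const filterlim_ident])
  have c2: "((\<lambda>R. cdf ?D (-1 + R)) \<longlongrightarrow> 1) at_top" by (rule filterlim_compose[OF c1 fl])
  have c3: "((\<lambda>R. 1 - cdf ?D (-1 + R)) \<longlongrightarrow> 0) at_top" using tendsto_diff[OF tendsto_const c2, of 1] by simp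
  have le: "tail R \<le> 1 - cdf ?D (-1 + R)" for R
  proof -
    let ?B = "{z \<in> space (gauss_noise n 1). N2 z \<le> -1 + R}"
    have B: "?B \<in> sets (gauss_noise n 1)" using N2_meas by measurable
    have C: "space (gauss_noise n 1) - ?B \<in> sets (gauss_noise n 1)" using sets.compl_sets[OF B] .
    have "tail R \<le> measure (gauss_noise n 1) (space (gauss_noise n 1) - ?B)"
      unfolding tail_def by (rule P.finite_measure_mono[OF _ C]) auto
    also have "\<dots> = 1 - measure (gauss_noise n 1) ?B"
      using P.finite_measure_Diff[OF _ B] P.prob_space by simp
    also have "\<dots> = 1 - cdf ?D (-1 + R)" unfolding cdf_N2 ..
    finally show ?thesis .
  qed
  have e1: "\<forall>\<^sub>F R in at_top. 0 \<le> tail R" unfolding tail_def by (rule always_eventually) simp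
  have e2: "\<forall>\<^sub>F R in at_top. tail R \<le> 1 - cdf ?D (-1 + R)" by (rule always_eventually) (use le in blast)
  show ?thesis by (rule real_tendsto_sandwich[OF e1 e2 tendsto_const c3])
qed

lemma low_zero: assumes k: "k0 < k" "k < kmax" shows "low k 0 = 0"
proof -
  interpret P: prob_space "gauss_noise n 1" by (rule mu1)
  have le: "low k 0 \<le> tail R" if R: "R > 0" for R
  proof -
    define s where "s = delta0 / R"
    have s: "s > 0" unfolding s_def using R delta0_pos by simp
    obtain N' where N': "N' \<in> sets (gauss_noise n 1)" "measure (gauss_noise n 1) N' = 0"
      "\<And>z. z \<in> space (gauss_noise n 1) \<Longrightarrow> z \<notin> N' \<Longrightarrow> valid (Ssc s z)"
      using null_set[OF s] by blast
    let ?B = "{z \<in> space (gauss_noise n 1). R \<le> N2 z}"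
    have B: "?B \<in> sets (gauss_noise n 1)" using N2_meas by measurable
    have sub: "{z \<in> space (gauss_noise n 1). T k z \<le> 0} \<subseteq> ?B \<union> N'"
    proof
      fix z assume z: "z \<in> {z \<in> space (gauss_noise n 1). T k z \<le> 0}"
      show "z \<in> ?B \<union> N'"
      proof (rule ccontr)
        assume "z \<notin> ?B \<union> N'"
        hence "N2 z < R" "z \<notin> N'" using z by auto
        hence lt: "N2 z < R" and vz: "valid (Ssc s z)" using N'(3) z by auto
        have "s * N2 z < s * R" using lt s by simp
        also have "s * R = delta0" unfolding s_def using R by simp
        finally have "s * N2 z < delta0" .
        hence "T k z > 0" using T_pos[OF s vz _ k] by blast
        thus False using z by simp
      qed
    qed
    have "low k 0 \<le> measure (gauss_noise n 1) (?B \<union> N')"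
      unfolding low_def by (rule P.finite_measure_mono[OF sub]) (use B N' in auto)
    also have "\<dots> \<le> measure (gauss_noise n 1) ?B + measure (gauss_noise n 1) N'"
      by (rule measure_Un_le[OF B N'(1)])
    finally show ?thesis unfolding tail_def using N'(2) by simp
  qed
  have "low k 0 \<le> 0"
  proof (rule tendsto_le[OF _ tail_lim tendsto_const])
    show "\<forall>\<^sub>F R in at_top. low k 0 \<le> tail R"
      using eventually_gt_at_top[of "0::real"] by eventually_elim (rule le)
  qed simp
  thus ?thesis unfolding low_def using measure_nonneg[of "gauss_noise n 1"] by (simp add: antisym)
qed

lemma low_lim: assumes k: "k0 < k" "k < kmax" shows "(low k \<longlongrightarrow> 0) (at_right 0)"
proof -
  interpret P: prob_space "gauss_noise n 1" by (rule mu1)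
  let ?D = "distr (gauss_noise n 1) borel (T k)"
  have RD: "real_distribution ?D" by (rule P.real_distribution_distr[OF T_meas])
  have "continuous (at_right 0) (cdf ?D)"
    by (rule finite_borel_measure.cdf_is_right_cont[OF real_distribution.finite_borel_measure_M[OF RD]])
  hence "(cdf ?D \<longlongrightarrow> cdf ?D 0) (at_right 0)" by (simp add: continuous_within)
  thus ?thesis unfolding cdf_T[abs_def] low_zero[OF k] .
qed

end



context omp_prob begin

lemma bound:
  assumes s: "s > 0"
  shows "measure (gauss_noise n s) {w \<in> space (gauss_noise n s). tf_omp_fails X (X *\<^sub>v \<beta> + Matrix.vec n w) kmax I}
    \<le> tail (delta0 / s) + tail (1 / sqrt s) + (\<Sum>k\<in>{Suc k0..<kmax}. low k (4 * sqrt s / cmin))"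
    (is "measure _ ?F \<le> ?g")
proof -
  interpret P: prob_space "gauss_noise n 1" by (rule mu1)
  have g0: "0 \<le> ?g" unfolding tail_def low_def by (intro add_nonneg_nonneg sum_nonneg) auto
  show ?thesis
  proof (cases "?F \<in> sets (gauss_noise n s)")
    case False
    thus ?thesis using g0 measure_notin_sets[OF False] by simp
  next
    case True
    have m: "Ssc s \<in> gauss_noise n 1 \<rightarrow>\<^sub>M gauss_noise n s" by (rule Ssc_meas[OF s])
    have "measure (gauss_noise n s) ?F = measure (distr (gauss_noise n 1) (gauss_noise n s) (Ssc s)) ?F"
      using gauss_scale[OF s, of n] unfolding Ssc_def by simp
    also have "\<dots> = measure (gauss_noise n 1) (Ssc s -` ?F \<inter> space (gauss_noise n 1))"
      by (rule measure_distr[OF m True])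
    finally have eq: "measure (gauss_noise n s) ?F = measure (gauss_noise n 1) (Ssc s -` ?F \<inter> space (gauss_noise n 1))" .
    obtain N' where N': "N' \<in> sets (gauss_noise n 1)" "measure (gauss_noise n 1) N' = 0"
      "\<And>z. z \<in> space (gauss_noise n 1) \<Longrightarrow> z \<notin> N' \<Longrightarrow> valid (Ssc s z)"
      using null_set[OF s] by blast
    let ?K = "{Suc k0..<kmax}"
    let ?B1 = "{z \<in> space (gauss_noise n 1). delta0 / s \<le> N2 z}"
    let ?B2 = "{z \<in> space (gauss_noise n 1). 1 / sqrt s \<le> N2 z}"
    let ?C = "\<lambda>k. {z \<in> space (gauss_noise n 1). T k z \<le> 4 * sqrt s / cmin}"
    have B1: "?B1 \<in> sets (gauss_noise n 1)" using N2_meas by measurable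
    have B2: "?B2 \<in> sets (gauss_noise n 1)" using N2_meas by measurable
    have C: "?C k \<in> sets (gauss_noise n 1)" for k using T_meas[of k] by measurable
    have U: "(\<Union>k\<in>?K. ?C k) \<in> sets (gauss_noise n 1)" using C by auto
    have sub: "Ssc s -` ?F \<inter> space (gauss_noise n 1) \<subseteq> ?B1 \<union> ?B2 \<union> (\<Union>k\<in>?K. ?C k) \<union> N'"
    proof
      fix z assume z: "z \<in> Ssc s -` ?F \<inter> space (gauss_noise n 1)"
      show "z \<in> ?B1 \<union> ?B2 \<union> (\<Union>k\<in>?K. ?C k) \<union> N'"
      proof (rule ccontr)
        assume nz: "z \<notin> ?B1 \<union> ?B2 \<union> (\<Union>k\<in>?K. ?C k) \<union> N'"
        have zs: "z \<in> space (gauss_noise n 1)" using z by simp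
        have l1: "N2 z < delta0 / s" and l2: "N2 z < 1 / sqrt s" and zN: "z \<notin> N'" using nz zs by auto
        have "s * N2 z < s * (delta0 / s)" using l1 s by (intro mult_strict_left_mono) auto
        also have "s * (delta0 / s) = delta0" using s by simp
        finally have sm: "s * N2 z < delta0" .
        have F: "tf_omp_fails X (Xb + Matrix.vec n (Ssc s z)) kmax I" using z unfolding Xb_def by simp
        obtain k where "k \<in> ?K" "T k z \<le> 4 * sqrt s / cmin"
          using fail_T[OF s N'(3)[OF zs zN] sm l2 F] by blast
        thus False using nz zs by auto
      qed
    qed
    have "measure (gauss_noise n 1) (Ssc s -` ?F \<inter> space (gauss_noise n 1))
        \<le> measure (gauss_noise n 1) (?B1 \<union> ?B2 \<union> (\<Union>k\<in>?K. ?C k) \<union> N')"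
      by (rule P.finite_measure_mono[OF sub]) (use B1 B2 U N' in auto)
    also have "\<dots> \<le> measure (gauss_noise n 1) (?B1 \<union> ?B2 \<union> (\<Union>k\<in>?K. ?C k)) + measure (gauss_noise n 1) N'"
      by (rule measure_Un_le) (use B1 B2 U N' in auto)
    also have "measure (gauss_noise n 1) (?B1 \<union> ?B2 \<union> (\<Union>k\<in>?K. ?C k))
        \<le> measure (gauss_noise n 1) (?B1 \<union> ?B2) + measure (gauss_noise n 1) (\<Union>k\<in>?K. ?C k)"
      by (rule measure_Un_le) (use B1 B2 U in auto)
    also have "measure (gauss_noise n 1) (?B1 \<union> ?B2) \<le> measure (gauss_noise n 1) ?B1 + measure (gauss_noise n 1) ?B2"
      by (rule measure_Un_le[OF B1 B2])
    also have "measure (gauss_noise n 1) (\<Union>k\<in>?K. ?C k) \<le> (\<Sum>k\<in>?K. measure (gauss_noise n 1) (?C k))"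
      by (rule P.finite_measure_subadditive_finite) (use C in auto)
    finally show ?thesis unfolding eq tail_def low_def using N'(2) by simp
  qed
qed

theorem main:
  "((\<lambda>s. measure (gauss_noise n s)
             {w \<in> space (gauss_noise n s). tf_omp_fails X (X *\<^sub>v \<beta> + Matrix.vec n w) kmax I})
          \<longlongrightarrow> 0) (at_right 0)"
proof -
  have pos: "\<forall>\<^sub>F s in at_right (0::real). 0 < s" by (rule eventually_at_right_less)
  have fl1: "filterlim (\<lambda>s. delta0 / s) at_top (at_right (0::real))"
    unfolding divide_inverse
    by (rule filterlim_tendsto_pos_mult_at_top[OF tendsto_const delta0_pos filterlim_inverse_at_top_right])
  have sq: "filterlim sqrt (at_right 0) (at_right (0::real))"
  proof (rule tendsto_imp_filterlim_at_right)
    show "(sqrt \<longlongrightarrow> 0) (at_right 0)" using tendsto_real_sqrt[OF tendsto_ident_at, of 0 "{0<..}"] by simp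
    show "\<forall>\<^sub>F x in at_right 0. 0 < sqrt x" using pos by eventually_elim simp
  qed
  have fl2: "filterlim (\<lambda>s. 1 / sqrt s) at_top (at_right (0::real))"
    unfolding divide_inverse by simp (rule filterlim_compose[OF filterlim_inverse_at_top_right sq])
  have fl3: "filterlim (\<lambda>s. 4 * sqrt s / cmin) (at_right 0) (at_right (0::real))"
  proof (rule tendsto_imp_filterlim_at_right)
    have "((\<lambda>s. 4 * sqrt s / cmin) \<longlongrightarrow> 4 * sqrt 0 / cmin) (at_right 0)"
      by (intro tendsto_intros) (use cmin_pos in simp)
    thus "((\<lambda>s. 4 * sqrt s / cmin) \<longlongrightarrow> 0) (at_right 0)" by simp
    show "\<forall>\<^sub>F x in at_right 0. 0 < 4 * sqrt x / cmin" using pos by eventually_elim (use cmin_pos in simp)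
  qed
  have t1: "((\<lambda>s. tail (delta0 / s)) \<longlongrightarrow> 0) (at_right 0)" by (rule filterlim_compose[OF tail_lim fl1])
  have t2: "((\<lambda>s. tail (1 / sqrt s)) \<longlongrightarrow> 0) (at_right 0)" by (rule filterlim_compose[OF tail_lim fl2])
  have t3: "((\<lambda>s. \<Sum>k\<in>{Suc k0..<kmax}. low k (4 * sqrt s / cmin)) \<longlongrightarrow> 0) (at_right 0)"
  proof (rule tendsto_null_sum)
    fix k assume "k \<in> {Suc k0..<kmax}"
    hence k: "k0 < k" "k < kmax" by auto
    show "((\<lambda>s. low k (4 * sqrt s / cmin)) \<longlongrightarrow> 0) (at_right 0)"
      by (rule filterlim_compose[OF low_lim[OF k] fl3])
  qed
  have tg: "((\<lambda>s. tail (delta0 / s) + tail (1 / sqrt s) + (\<Sum>k\<in>{Suc k0..<kmax}. low k (4 * sqrt s / cmin))) \<longlongrightarrow> 0) (at_right 0)"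
    using tendsto_add[OF tendsto_add[OF t1 t2] t3] by simp
  show ?thesis
  proof (rule real_tendsto_sandwich[OF _ _ tendsto_const tg])
    show "\<forall>\<^sub>F s in at_right 0. 0 \<le> measure (gauss_noise n s) {w \<in> space (gauss_noise n s). tf_omp_fails X (X *\<^sub>v \<beta> + Matrix.vec n w) kmax I}"
      by (rule always_eventually) simp
    show "\<forall>\<^sub>F s in at_right 0. measure (gauss_noise n s) {w \<in> space (gauss_noise n s). tf_omp_fails X (X *\<^sub>v \<beta> + Matrix.vec n w) kmax I}
        \<le> tail (delta0 / s) + tail (1 / sqrt s) + (\<Sum>k\<in>{Suc k0..<kmax}. low k (4 * sqrt s / cmin))"
      using pos by eventually_elim (rule bound)
  qed
qed

end

theorem theorem2:
  fixes X :: "real mat" and \<beta> :: "real Matrix.vec" and I :: "nat set"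
    and n p k0 kmax :: nat
  assumes X_dim: "X \<in> carrier_mat n p"
    and beta_dim: "\<beta> \<in> carrier_vec p"
    and unit_cols: "\<forall>j<p. sq_norm (col X j) = 1"
    and supp: "I = {j. j < p \<and> \<beta> $ j \<noteq> 0}"
    and card_I: "card I = k0" and k0_pos: "k0 \<ge> 1"
    and ERC_rank: "full_col_rank (col_sub X (sorted_list_of_set I))"
    and ERC: "\<forall>j<p. j \<notin> I \<longrightarrow>
                 l1_norm (pinv (col_sub X (sorted_list_of_set I)) *\<^sub>v col X j) < 1"
    and kmax: "kmax > k0"
    and standing: "\<forall>s>0. AE w in gauss_noise n s.
                     omp_valid X (X *\<^sub>v \<beta> + Matrix.vec n w) kmax"
  shows "((\<lambda>s. measure (gauss_noise n s)
             {w \<in> space (gauss_noise n s).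
                tf_omp_fails X (X *\<^sub>v \<beta> + Matrix.vec n w) kmax I})
          \<longlongrightarrow> 0) (at_right 0)"
proof -
  interpret omp_prob X \<beta> I n p k0 kmax
    using X_dim beta_dim unit_cols supp card_I k0_pos ERC_rank ERC kmax standing
    by unfold_locales auto
  show ?thesis by (rule main)
qed

end
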